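(* Let $m \geq 0$, $n \geq 1$ be integers. For every $w = w_1 \cdots w_{m+n-1} \in \mathrm{Motz}_{m,n-1}$, the configuration $c(w)$ is a sorted deterministically recurrent configuration on $K_{m,n}^0$, and $\Xi(\Phi(c(w))) = w$. Consequently, $w \mapsto c(w)$ is the bijection $\Phi^{-1} \circ \Xi^{-1}$ from $\mathrm{Motz}_{m,n-1}$ to the set of sorted deterministically recurrent configurations on $K_{m,n}^0$.
   Context: $K_{m,n}^0$ is the complete bipartite graph with "top" vertices $v^t_0, \ldots, v^t_m$ and "bottom" vertices $v^b_1, \ldots, v^b_n$, with an edge between every top and every bottom vertex; $v^t_0$ is the sink. A configuration is a vector $c = (c^t_1, \ldots, c^t_m; c^b_1, \ldots, c^b_n)$ of non-negative integers; it is sorted if $c^t$, $c^b$ are weakly increasing, stable if $c^t_i < n$ and $c^b_j < m+1$ for all $i,j$. Abelian sandpile model (ASM): an unstable non-sink vertex topples by sending one grain to each neighbour (bottom vertices also to the sink); grains sent to the sink disappear. In the Markov chain on stable configurations which adds a grain to a uniformly random non-sink vertex and stabilises by the ASM, a stable configuration is deterministically recurrent if it is a recurrent state. Labelled Motzkin paths: words in steps $U=(1,1)$, $D=(1,-1)$ and horizontal steps $H^N, H^E$ (both $=(1,0)$), starting and ending at height $0$ and never going below the $x$-axis. $\mathrm{Motz}_{m,n-1}$ is the set of such paths with $m+n-1$ steps, exactly $m$ of which are $U$ or $H^E$ (equivalently exactly $n-1$ are $D$ or $H^N$). For $w \in \mathrm{Motz}_{m,n-1}$, $c(w) = (c^t;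 c^b)$ is defined by: for $i \in \{1,\ldots,m\}$, if $w_j$ is the $i$-th step of $w$ belonging to $\{D, H^E\}$, then $c^t_i := |\{ j' < j : w_{j'} \in \{U, H^N\}\}|$; for $j \in \{1,\ldots,n-1\}$, if $w_i$ is the $j$-th step of $w$ belonging to $\{D, H^N\}$, then $c^b_j := |\{ i' < i : w_{i'} \in \{U, H^E\}\}|$; and $c^b_n := m$. A parallelogram polyomino in the box $[0,m+1]\times[0,n]$ is the set of unit cells between two lattice paths $\mathcal{U}$ (upper) and $\mathcal{L}$ (lower) from $(0,0)$ to $(m+1,n)$ with steps $N=(0,1)$, $E=(1,0)$, meeting only at their endpoints; necessarily $\mathcal{U} = (N, u_1, \ldots, u_{m+n-1}, E)$ and $\mathcal{L} = (E, \ell_1, \ldots, \ell_{m+n-1}, N)$. The map $\Xi$ sends such a polyomino to $w_1 \cdots w_{m+n-1}$ with $w_i = U$ if $(u_i,\ell_i) = (N,E)$, $w_i = H^N$ if $(u_i,\ell_i)=(N,N)$, $w_i = H^E$ if $(u_i,\ell_i) = (E,E)$, $w_i = D$ if $(u_i,\ell_i) = (E,N)$; it is known to be a bijection onto $\mathrm{Motz}_{m,n-1}$. The Dukes–Le Borgne map $\Phi$: for a sorted stable $c$, $\mathcal{U}(c^t)$ is the path from $(0,0)$ to $(m+1,n)$ whose $E$ steps occur at heights $1+c^t_1, \ldots, 1+c^t_m, n$, and $\mathcal{L}(c^b)$ the path from $(0,0)$ to $(m+1,n)$ whose $N$ steps occur at $x$-coordinates $1+c^b_1, \ldots, 1+c^b_n$;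 $\Phi(c)$ is the polyomino between them. It is known that $\Phi$ is a bijection from sorted deterministically recurrent configurations on $K_{m,n}^0$ to parallelogram polyominoes in $[0,m+1]\times[0,n]$. *)

theory Defs
  imports Main
begin

datatype vtx = T nat | B nat

definition nonsink :: "nat \<Rightarrow> nat \<Rightarrow> vtx set" where
  "nonsink m n = {T i | i. 1 \<le> i \<and> i \<le> m} \<union> {B j | j. 1 \<le> j \<and> j \<le> n}"

definition verts :: "nat \<Rightarrow> nat \<Rightarrow> vtx set" where
  "verts m n = insert (T 0) (nonsink m n)"

definition adj :: "nat \<Rightarrow> nat \<Rightarrow> vtx \<Rightarrow> vtx \<Rightarrow> bool" where
  "adj m n u v = (\<exists>i j. i \<le> m \<and> 1 \<le> j \<and> j \<le> n \<and> ((u = T i \<and> v = B j) \<or> (u = B j \<and> v = T i)))"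

definition deg :: "nat \<Rightarrow> nat \<Rightarrow> vtx \<Rightarrow> nat" where
  "deg m n v = card {u \<in> verts m n. adj m n v u}"

type_synonym config = "vtx \<Rightarrow> nat"

definition valid_cfg :: "nat \<Rightarrow> nat \<Rightarrow> config \<Rightarrow> bool" where
  "valid_cfg m n c = (\<forall>v. v \<notin> nonsink m n \<longrightarrow> c v = 0)"

definition stable :: "nat \<Rightarrow> nat \<Rightarrow> config \<Rightarrow> bool" where
  "stable m n c = (\<forall>v \<in> nonsink m n. c v < deg m n v)"

definition sorted_cfg :: "nat \<Rightarrow> nat \<Rightarrow> config \<Rightarrow> bool" where
  "sorted_cfg m n c =
     ((\<forall>i. 1 \<le> i \<and> i < m \<longrightarrow> c (T i) \<le> c (T (Suc i))) \<and>
      (\<forall>j. 1 \<le> j \<and> j < n \<longrightarrow> c (B j) \<le> c (B (Suc j))))"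

definition topple :: "nat \<Rightarrow> nat \<Rightarrow> vtx \<Rightarrow> config \<Rightarrow> config" where
  "topple m n v c = (\<lambda>u. if u = v then c u - deg m n v
                        else if u \<in> nonsink m n \<and> adj m n v u then c u + 1 else c u)"

definition topple_step :: "nat \<Rightarrow> nat \<Rightarrow> config \<Rightarrow> config \<Rightarrow> bool" where
  "topple_step m n c c' = (\<exists>v \<in> nonsink m n. deg m n v \<le> c v \<and> c' = topple m n v c)"

definition stabilises_to :: "nat \<Rightarrow> nat \<Rightarrow> config \<Rightarrow> config \<Rightarrow> bool" where
  "stabilises_to m n c d = ((topple_step m n)\<^sup>*\<^sup>* c d \<and> stable m n d)"

text \<open>Transition relation of the Markov chain on stable configurations: add a grain at
  some non-sink vertex (each has positive probability) and stabilise.\<close>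
definition chain_step :: "nat \<Rightarrow> nat \<Rightarrow> config \<Rightarrow> config \<Rightarrow> bool" where
  "chain_step m n c d = (valid_cfg m n c \<and> stable m n c \<and>
      (\<exists>v \<in> nonsink m n. stabilises_to m n (c(v := Suc (c v))) d))"

text \<open>Recurrent state of a finite Markov chain: every state accessible from c leads back to c.\<close>
definition det_recurrent :: "nat \<Rightarrow> nat \<Rightarrow> config \<Rightarrow> bool" where
  "det_recurrent m n c = (valid_cfg m n c \<and> stable m n c \<and>
      (\<forall>d. (chain_step m n)\<^sup>*\<^sup>* c d \<longrightarrow> (chain_step m n)\<^sup>*\<^sup>* d c))"

definition SDR :: "nat \<Rightarrow> nat \<Rightarrow> config set" where
  "SDR m n = {c. sorted_cfg m n c \<and> det_recurrent m n c}"

datatype mstep = MU | MD | MHN | MHE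

fun hstep :: "mstep \<Rightarrow> int" where
  "hstep MU = 1" | "hstep MD = -1" | "hstep MHN = 0" | "hstep MHE = 0"

definition height :: "mstep list \<Rightarrow> int" where
  "height w = sum_list (map hstep w)"

definition Motz :: "nat \<Rightarrow> nat \<Rightarrow> mstep list set" where
  "Motz m k = {w. length w = m + k \<and>
                  length (filter (\<lambda>s. s = MU \<or> s = MHE) w) = m \<and>
                  (\<forall>j \<le> length w. height (take j w) \<ge> 0) \<and> height w = 0}"

text \<open>Positions (0-based) of the steps satisfying P, and the number of steps satisfying Q
  strictly before position j.\<close>
definition positions :: "(mstep \<Rightarrow> bool) \<Rightarrow> mstep list \<Rightarrow> nat list" where
  "positions P w = filter (\<lambda>j. P (w ! j)) [0..<length w]"

definition count_before :: "(mstep \<Rightarrow> bool) \<Rightarrow> mstep list \<Rightarrow> nat \<Rightarrow> nat" where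
  "count_before Q w j = length (filter Q (take j w))"

definition cfg_of :: "nat \<Rightarrow> nat \<Rightarrow> mstep list \<Rightarrow> config" where
  "cfg_of m n w = (\<lambda>v. case v of
      T i \<Rightarrow> if 1 \<le> i \<and> i \<le> m then
               count_before (\<lambda>s. s = MU \<or> s = MHN) w (positions (\<lambda>s. s = MD \<or> s = MHE) w ! (i - 1))
             else 0
    | B j \<Rightarrow> if 1 \<le> j \<and> j < n then
               count_before (\<lambda>s. s = MU \<or> s = MHE) w (positions (\<lambda>s. s = MD \<or> s = MHN) w ! (j - 1))
             else if j = n then m else 0)"

datatype dir = dN | dE

definition lpt :: "dir list \<Rightarrow> nat \<Rightarrow> nat \<times> nat" where
  "lpt p k = (length (filter (\<lambda>s. s = dE) (take k p)), length (filter (\<lambda>s. s = dN) (take k p)))"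

definition lpts :: "dir list \<Rightarrow> (nat \<times> nat) set" where
  "lpts p = {lpt p k | k. k \<le> length p}"

text \<open>A parallelogram polyomino in [0,m+1]x[0,n], represented by its pair of bounding paths
  (upper, lower); the upper one is the one starting with a north step. The pair determines and is determined by its set of cells.\<close>
definition Polys :: "nat \<Rightarrow> nat \<Rightarrow> (dir list \<times> dir list) set" where
  "Polys m n = {(Up, Lo).
      length Up = m + 1 + n \<and> length (filter (\<lambda>s. s = dE) Up) = m + 1 \<and>
      length Lo = m + 1 + n \<and> length (filter (\<lambda>s. s = dE) Lo) = m + 1 \<and>
      lpts Up \<inter> lpts Lo = {(0, 0), (m + 1, n)} \<and>
      Up \<noteq> [] \<and> hd Up = dN}"

fun xi_step :: "dir \<Rightarrow> dir \<Rightarrow> mstep" where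
  "xi_step dN dE = MU"
| "xi_step dN dN = MHN"
| "xi_step dE dE = MHE"
| "xi_step dE dN = MD"

definition Xi :: "dir list \<times> dir list \<Rightarrow> mstep list" where
  "Xi P = map (\<lambda>(u, l). xi_step u l) (zip (butlast (tl (fst P))) (butlast (tl (snd P))))"

text \<open>Path with steps a at the successive "levels" hs (level = number of b steps before),
  completed with b steps up to level tp.\<close>
fun path_at :: "dir \<Rightarrow> dir \<Rightarrow> nat \<Rightarrow> nat list \<Rightarrow> nat \<Rightarrow> dir list" where
  "path_at b a prev [] tp = replicate (tp - prev) b"
| "path_at b a prev (h # hs) tp = replicate (h - prev) b @ a # path_at b a h hs tp"

definition Phi :: "nat \<Rightarrow> nat \<Rightarrow> config \<Rightarrow> dir list \<times> dir list" where
  "Phi m n c =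
     (path_at dN dE 0 (map (\<lambda>i. 1 + c (T i)) [1..<m + 1] @ [n]) n,
      path_at dE dN 0 (map (\<lambda>j. 1 + c (B j)) [1..<n + 1]) (m + 1))"

end

theory Submission
  imports Defs
begin

lemma nonsink_iff[simp]:
  "T i \<in> nonsink m n \<longleftrightarrow> 1 \<le> i \<and> i \<le> m"
  "B j \<in> nonsink m n \<longleftrightarrow> 1 \<le> j \<and> j \<le> n"
  by (auto simp: nonsink_def)

lemma nonsink_eq: "nonsink m n = T ` {1..m} \<union> B ` {1..n}"
  by (auto simp: nonsink_def)

lemma finite_nonsink[simp]: "finite (nonsink m n)"
  by (simp add: nonsink_eq)

lemma adj_simps[simp]:
  "adj m n (T i) (B j) \<longleftrightarrow> i \<le> m \<and> 1 \<le> j \<and> j \<le> n"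
  "adj m n (B j) (T i) \<longleftrightarrow> i \<le> m \<and> 1 \<le> j \<and> j \<le> n"
  "\<not> adj m n (T i) (T i')"
  "\<not> adj m n (B j) (B j')"
  by (auto simp: adj_def)

lemma deg_T: "i \<le> m \<Longrightarrow> deg m n (T i) = n"
proof -
  assume "i \<le> m"
  then have "{u \<in> verts m n. adj m n (T i) u} = B ` {1..n}"
    by (auto simp: verts_def nonsink_def adj_def)
  then show ?thesis unfolding deg_def by (simp add: card_image inj_on_def)
qed

lemma deg_B: "1 \<le> j \<Longrightarrow> j \<le> n \<Longrightarrow> deg m n (B j) = Suc m"
proof -
  assume "1 \<le> j" "j \<le> n"
  then have "{u \<in> verts m n. adj m n (B j) u} = T ` {0..m}"
    by (auto simp: verts_def nonsink_def adj_def)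
  then show ?thesis unfolding deg_def by (simp add: card_image inj_on_def)
qed

lemma topple_T:
  assumes "1 \<le> i" "i \<le> m"
  shows "topple m n (T i) c = (\<lambda>u. case u of T i' \<Rightarrow> if i' = i then c u - n else c u
                                    | B j \<Rightarrow> if 1 \<le> j \<and> j \<le> n then Suc (c u) else c u)"
  using assms by (auto simp: topple_def deg_T fun_eq_iff split: vtx.split)

lemma topple_B:
  assumes "1 \<le> j" "j \<le> n"
  shows "topple m n (B j) c = (\<lambda>u. case u of B j' \<Rightarrow> if j' = j then c u - Suc m else c u
                                    | T i \<Rightarrow> if 1 \<le> i \<and> i \<le> m then Suc (c u) else c u)"
  using assms by (auto simp: topple_def deg_B fun_eq_iff split: vtx.split)


lemma stable_iff:
  "stable m n c \<longleftrightarrow> (\<forall>i. 1 \<le> i \<and> i \<le> m \<longrightarrow> c (T i) < n) \<and> (\<forall>j. 1 \<le> j \<and> j \<le> n \<longrightarrow> c (B j) < Suc m)"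
  unfolding stable_def
proof safe
  fix i assume "\<forall>v\<in>nonsink m n. c v < deg m n v" "1 \<le> i" "i \<le> m"
  then have "c (T i) < deg m n (T i)" by auto
  then show "c (T i) < n" using deg_T[of i m n] \<open>i \<le> m\<close> by simp
next
  fix j assume "\<forall>v\<in>nonsink m n. c v < deg m n v" "1 \<le> j" "j \<le> n"
  then have "c (B j) < deg m n (B j)" by auto
  then show "c (B j) < Suc m" using deg_B[of j n m] \<open>1 \<le> j\<close> \<open>j \<le> n\<close> by simp
next
  fix v assume "\<forall>i. 1 \<le> i \<and> i \<le> m \<longrightarrow> c (T i) < n" "\<forall>j. 1 \<le> j \<and> j \<le> n \<longrightarrow> c (B j) < Suc m" "v \<in> nonsink m n"
  then show "c v < deg m n v" by (cases v) (auto simp: deg_T deg_B)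
qed

lemma valid_iff:
  "valid_cfg m n c \<longleftrightarrow> (\<forall>i. \<not>(1 \<le> i \<and> i \<le> m) \<longrightarrow> c (T i) = 0) \<and> (\<forall>j. \<not>(1 \<le> j \<and> j \<le> n) \<longrightarrow> c (B j) = 0)"
  unfolding valid_cfg_def
proof safe
  fix v assume "\<forall>i. \<not>(1 \<le> i \<and> i \<le> m) \<longrightarrow> c (T i) = 0" "\<forall>j. \<not>(1 \<le> j \<and> j \<le> n) \<longrightarrow> c (B j) = 0" "v \<notin> nonsink m n"
  then show "c v = 0" by (cases v) auto
qed (metis nonsink_iff not_gr0)+

definition W :: "nat \<Rightarrow> nat \<Rightarrow> config \<Rightarrow> nat" where
  "W m n c = (\<Sum>i=1..m. (2*m+2) * c (T i)) + (\<Sum>j=1..n. (2*m+1) * c (B j))"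

lemma sum_upd:
  assumes "finite A" "i \<in> A"
  shows "sum (\<lambda>x. if x = i then a else f x) A + f i = sum f A + (a::nat)"
proof -
  have "sum (\<lambda>x. if x = i then a else f x) A = a + sum (\<lambda>x. if x = i then a else f x) (A - {i})"
    using assms by (simp add: sum.remove)
  also have "sum (\<lambda>x. if x = i then a else f x) (A - {i}) = sum f (A - {i})"
    by (rule sum.cong) auto
  finally show ?thesis using assms by (simp add: sum.remove)
qed

lemma W_topple:
  assumes n: "n \<ge> 1" and st: "topple_step m n c c'"
  shows "W m n c' < W m n c"
proof -
  obtain v where v: "v \<in> nonsink m n" "deg m n v \<le> c v" "c' = topple m n v c"
    using st unfolding topple_step_def by blast
  show ?thesis
  proof (cases v)
    case (T i)
    with v have i: "1 \<le> i" "i \<le> m" and ci: "n \<le> c (T i)" by (auto simp: deg_T)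
    have c'T: "(\<Sum>i'=1..m. (2*m+2) * c' (T i')) = (\<Sum>i'=1..m. if i' = i then (2*m+2) * (c (T i) - n) else (2*m+2) * c (T i'))"
      using v(3) T i by (auto simp: topple_T intro!: sum.cong)
    have A: "(\<Sum>i'=1..m. (2*m+2) * c' (T i')) + (2*m+2) * c (T i) = (\<Sum>i'=1..m. (2*m+2) * c (T i')) + (2*m+2) * (c (T i) - n)"
      unfolding c'T using sum_upd[of "{1..m}" i "(2*m+2) * (c (T i) - n)" "\<lambda>i'. (2*m+2) * c (T i')"] i by simp
    have c'B: "(\<Sum>j=1..n. (2*m+1) * c' (B j)) = (\<Sum>j=1..n. (2*m+1) * c (B j) + (2*m+1))"
      using v(3) T i by (auto simp: topple_T intro!: sum.cong)
    have Bs: "(\<Sum>j=1..n. (2*m+1) * c' (B j)) = (\<Sum>j=1..n. (2*m+1) * c (B j)) + n * (2*m+1)"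
      unfolding c'B sum.distrib by simp
    have "(2*m+2) * (c (T i) - n) + n * (2*m+2) = (2*m+2) * c (T i)"
    proof -
      obtain k where "c (T i) = n + k" using ci le_Suc_ex by blast
      then show ?thesis by (simp add: algebra_simps)
    qed
    moreover have "n * (2*m+1) < n * (2*m+2)" using n by simp
    ultimately show ?thesis using A Bs unfolding W_def by linarith
  next
    case (B j)
    with v have j: "1 \<le> j" "j \<le> n" and cj: "Suc m \<le> c (B j)" by (auto simp: deg_B)
    have c'B: "(\<Sum>j'=1..n. (2*m+1) * c' (B j')) = (\<Sum>j'=1..n. if j' = j then (2*m+1) * (c (B j) - Suc m) else (2*m+1) * c (B j'))"
      using v(3) B j by (auto simp: topple_B intro!: sum.cong)
    have A: "(\<Sum>j'=1..n. (2*m+1) * c' (B j')) + (2*m+1) * c (B j) = (\<Sum>j'=1..n. (2*m+1) * c (B j')) + (2*m+1) * (c (B j) - Suc m)"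
      unfolding c'B using sum_upd[of "{1..n}" j "(2*m+1) * (c (B j) - Suc m)" "\<lambda>j'. (2*m+1) * c (B j')"] j by simp
    have c'T: "(\<Sum>i=1..m. (2*m+2) * c' (T i)) = (\<Sum>i=1..m. (2*m+2) * c (T i) + (2*m+2))"
      using v(3) B j by (auto simp: topple_B intro!: sum.cong)
    have Ts: "(\<Sum>i=1..m. (2*m+2) * c' (T i)) = (\<Sum>i=1..m. (2*m+2) * c (T i)) + m * (2*m+2)"
      unfolding c'T sum.distrib by simp
    have "(2*m+1) * (c (B j) - Suc m) + (Suc m) * (2*m+1) = (2*m+1) * c (B j)"
    proof -
      obtain k where "c (B j) = Suc m + k" using cj le_Suc_ex by blast
      then show ?thesis by (simp add: algebra_simps)
    qed
    moreover have "m * (2*m+2) < Suc m * (2*m+1)" by (simp add: algebra_simps)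
    ultimately show ?thesis using A Ts unfolding W_def by linarith
  qed
qed

lemma stable_no_step: "stable m n c \<Longrightarrow> \<not> topple_step m n c c'"
  unfolding stable_def topple_step_def using leD by blast

lemma stab_exists:
  assumes "n \<ge> 1"
  shows "\<exists>d. stabilises_to m n c d"
proof (induction "W m n c" arbitrary: c rule: less_induct)
  case less
  show ?case
  proof (cases "stable m n c")
    case True
    then show ?thesis unfolding stabilises_to_def by blast
  next
    case False
    then obtain v where v: "v \<in> nonsink m n" "deg m n v \<le> c v"
      unfolding stable_def by (auto simp: not_less)
    then have st: "topple_step m n c (topple m n v c)" unfolding topple_step_def by blast
    from less[OF W_topple[OF assms st]] obtain d where "stabilises_to m n (topple m n v c) d" by blast
    then show ?thesis using st unfolding stabilises_to_def by (meson converse_rtranclp_into_rtranclp)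
  qed
qed

lemma topple_comm:
  assumes "v1 \<noteq> v2" "deg m n v1 \<le> c v1" "deg m n v2 \<le> c v2"
  shows "topple m n v2 (topple m n v1 c) = topple m n v1 (topple m n v2 c)"
proof
  fix u
  let ?a1 = "u \<in> nonsink m n \<and> adj m n v1 u"
  let ?a2 = "u \<in> nonsink m n \<and> adj m n v2 u"
  show "topple m n v2 (topple m n v1 c) u = topple m n v1 (topple m n v2 c) u"
    unfolding topple_def
    using assms by (cases "u = v1"; cases "u = v2") (simp_all add: Suc_diff_le)
qed

lemma topple_diamond:
  assumes "topple_step m n c c1" "topple_step m n c c2"
  shows "\<exists>d. (topple_step m n)\<^sup>=\<^sup>= c1 d \<and> (topple_step m n)\<^sup>=\<^sup>= c2 d"
proof -
  obtain v1 where v1: "v1 \<in> nonsink m n" "deg m n v1 \<le> c v1" "c1 = topple m n v1 c"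
    using assms(1) unfolding topple_step_def by blast
  obtain v2 where v2: "v2 \<in> nonsink m n" "deg m n v2 \<le> c v2" "c2 = topple m n v2 c"
    using assms(2) unfolding topple_step_def by blast
  show ?thesis
  proof (cases "v1 = v2")
    case True then show ?thesis using v1 v2 by auto
  next
    case False
    have a: "deg m n v2 \<le> c1 v2" using v1 v2 False unfolding topple_def by simp
    have b: "deg m n v1 \<le> c2 v1" using v1 v2 False unfolding topple_def by simp
    have "topple_step m n c1 (topple m n v2 c1)" using a v2 unfolding topple_step_def by blast
    moreover have "topple_step m n c2 (topple m n v1 c2)" using b v1 unfolding topple_step_def by blast
    moreover have "topple m n v2 c1 = topple m n v1 c2"
      using topple_comm[OF False v1(2) v2(2)] v1 v2 by simp
    ultimately show ?thesis by auto
  qed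
qed

lemma diamond_confluent:
  fixes S :: "'a \<Rightarrow> 'a \<Rightarrow> bool"
  assumes dia: "\<forall>a b c. S a b \<longrightarrow> S a c \<longrightarrow> (\<exists>d. S b d \<and> S c d)"
    and ab: "S\<^sup>*\<^sup>* a b" and ac: "S\<^sup>*\<^sup>* a c"
  shows "\<exists>d. S\<^sup>*\<^sup>* b d \<and> S\<^sup>*\<^sup>* c d"
proof -
  have strip: "S\<^sup>*\<^sup>* a b \<Longrightarrow> S a c \<Longrightarrow> \<exists>d. S b d \<and> S\<^sup>*\<^sup>* c d" for a b c
  proof (induction rule: rtranclp_induct)
    case base then show ?case by blast
  next
    case (step y z)
    then obtain d where d: "S y d" "S\<^sup>*\<^sup>* c d" by blast
    from dia step(2) d(1) obtain e where "S z e" "S d e" by blast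
    then show ?case using d(2) by (meson rtranclp.rtrancl_into_rtrancl)
  qed
  show ?thesis using ac
  proof (induction rule: rtranclp_induct)
    case base then show ?case using ab by blast
  next
    case (step y z)
    then obtain d where d: "S\<^sup>*\<^sup>* b d" "S\<^sup>*\<^sup>* y d" by blast
    from strip[OF d(2) step(2)] obtain e where "S d e" "S\<^sup>*\<^sup>* z e" by blast
    then show ?case using d(1) by (meson rtranclp.rtrancl_into_rtrancl)
  qed
qed

lemma topple_confluent:
  assumes "(topple_step m n)\<^sup>*\<^sup>* c d1" "(topple_step m n)\<^sup>*\<^sup>* c d2"
  shows "\<exists>e. (topple_step m n)\<^sup>*\<^sup>* d1 e \<and> (topple_step m n)\<^sup>*\<^sup>* d2 e"
proof -
  define S where "S = (topple_step m n)\<^sup>=\<^sup>="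
  have eq: "S\<^sup>*\<^sup>* = (topple_step m n)\<^sup>*\<^sup>*" unfolding S_def by simp
  have dia: "\<exists>d. S b d \<and> S c d" if ab: "S a b" and ac: "S a c" for a b c
  proof (cases "a = b")
    case True then show ?thesis using ac S_def by auto
  next
    case False
    then have ab': "topple_step m n a b" using ab S_def by auto
    show ?thesis
    proof (cases "a = c")
      case True then show ?thesis using ab S_def by auto
    next
      case False
      then have "topple_step m n a c" using ac S_def by auto
      then obtain d where "(topple_step m n)\<^sup>=\<^sup>= b d" "(topple_step m n)\<^sup>=\<^sup>= c d"
        using topple_diamond[OF ab'] by blast
      then show ?thesis unfolding S_def by blast
    qed
  qed
  have h: "S\<^sup>*\<^sup>* c d1" "S\<^sup>*\<^sup>* c d2" using assms unfolding eq by simp_all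
  have dia': "\<forall>a b c. S a b \<longrightarrow> S a c \<longrightarrow> (\<exists>d. S b d \<and> S c d)" using dia by blast
  obtain e where "S\<^sup>*\<^sup>* d1 e" "S\<^sup>*\<^sup>* d2 e" using diamond_confluent[OF dia' h] by blast
  then show ?thesis unfolding eq by blast
qed

lemma stable_rtranclp: "stable m n c \<Longrightarrow> (topple_step m n)\<^sup>*\<^sup>* c d \<Longrightarrow> d = c"
  by (metis converse_rtranclpE stable_no_step)

lemma stab_unique:
  assumes "(topple_step m n)\<^sup>*\<^sup>* c d1" "stable m n d1" "(topple_step m n)\<^sup>*\<^sup>* c d2" "stable m n d2"
  shows "d1 = d2"
  using topple_confluent[OF assms(1,3)] stable_rtranclp assms(2,4) by metis

definition cadd :: "config \<Rightarrow> config \<Rightarrow> config" where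
  "cadd c a = (\<lambda>u. c u + a u)"

lemma topple_cadd:
  assumes "deg m n v \<le> c v"
  shows "topple m n v (cadd c a) = cadd (topple m n v c) a"
proof
  fix u show "topple m n v (cadd c a) u = cadd (topple m n v c) a u"
    using assms unfolding topple_def cadd_def by (cases "u = v") simp_all
qed

lemma topple_step_cadd: "topple_step m n c c' \<Longrightarrow> topple_step m n (cadd c a) (cadd c' a)"
proof -
  assume "topple_step m n c c'"
  then obtain v where v: "v \<in> nonsink m n" "deg m n v \<le> c v" "c' = topple m n v c"
    unfolding topple_step_def by blast
  have "deg m n v \<le> cadd c a v" using v(2) unfolding cadd_def by simp
  then show ?thesis using v topple_cadd[of m n v c a, OF v(2)] unfolding topple_step_def by metis
qed

lemma topples_cadd: "(topple_step m n)\<^sup>*\<^sup>* c c' \<Longrightarrow> (topple_step m n)\<^sup>*\<^sup>* (cadd c a) (cadd c' a)"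
proof (induction rule: rtranclp_induct)
  case base then show ?case by simp
next
  case (step y z) then show ?case using topple_step_cadd by (metis rtranclp.rtrancl_into_rtrancl)
qed

lemma topple_step_valid: "topple_step m n c c' \<Longrightarrow> valid_cfg m n c \<Longrightarrow> valid_cfg m n c'"
  unfolding topple_step_def valid_cfg_def topple_def by auto

lemma topples_valid: "(topple_step m n)\<^sup>*\<^sup>* c c' \<Longrightarrow> valid_cfg m n c \<Longrightarrow> valid_cfg m n c'"
  by (induction rule: rtranclp_induct) (auto intro: topple_step_valid)

lemma chain_step_vs: "chain_step m n c d \<Longrightarrow> valid_cfg m n d \<and> stable m n d"
proof -
  assume "chain_step m n c d"
  then obtain v where v: "valid_cfg m n c" "v \<in> nonsink m n" "stabilises_to m n (c(v := Suc (c v))) d"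
    unfolding chain_step_def by blast
  have "valid_cfg m n (c(v := Suc (c v)))" using v(1,2) unfolding valid_cfg_def by auto
  then show ?thesis using v(3) topples_valid unfolding stabilises_to_def by blast
qed

lemma chains_vs: "(chain_step m n)\<^sup>*\<^sup>* c d \<Longrightarrow> valid_cfg m n c \<Longrightarrow> stable m n c \<Longrightarrow> valid_cfg m n d \<and> stable m n d"
  by (induction rule: rtranclp_induct) (auto dest: chain_step_vs)

definition cmax :: "nat \<Rightarrow> nat \<Rightarrow> config" where
  "cmax m n = (\<lambda>u. case u of T i \<Rightarrow> if 1 \<le> i \<and> i \<le> m then n - 1 else 0
                          | B j \<Rightarrow> if 1 \<le> j \<and> j \<le> n then m else 0)"

lemma cmax_valid: "valid_cfg m n (cmax m n)"
  unfolding valid_iff cmax_def by simp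

lemma cmax_stable: "n \<ge> 1 \<Longrightarrow> stable m n (cmax m n)"
  unfolding stable_iff cmax_def by simp

lemma le_cmax:
  assumes "n \<ge> 1" "valid_cfg m n c" "stable m n c"
  shows "c u \<le> cmax m n u"
proof (cases u)
  case (T i) then show ?thesis using assms unfolding valid_iff stable_iff cmax_def
    by (cases "1 \<le> i \<and> i \<le> m") auto
next
  case (B j) then show ?thesis using assms unfolding valid_iff stable_iff cmax_def
    by (cases "1 \<le> j \<and> j \<le> n") auto
qed

lemma reach_cmax:
  assumes n: "n \<ge> 1"
  shows "valid_cfg m n c \<Longrightarrow> stable m n c \<Longrightarrow> (chain_step m n)\<^sup>*\<^sup>* c (cmax m n)"
proof (induction "\<Sum>v\<in>nonsink m n. cmax m n v - c v" arbitrary: c rule: less_induct)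
  case less
  show ?case
  proof (cases "c = cmax m n")
    case True then show ?thesis by simp
  next
    case False
    then obtain v where "c v \<noteq> cmax m n v" by auto
    moreover have "v \<in> nonsink m n"
    proof (rule ccontr)
      assume "v \<notin> nonsink m n"
      then show False using calculation less(2) cmax_valid[of m n] unfolding valid_cfg_def by auto
    qed
    ultimately have v: "v \<in> nonsink m n" "c v < cmax m n v" using le_cmax[OF n less(2,3), of v] by auto
    define c' where "c' = c(v := Suc (c v))"
    have vc': "valid_cfg m n c'" using less(2) v(1) unfolding valid_cfg_def c'_def by auto
    have sc': "stable m n c'"
    proof -
      have "\<forall>u. c' u \<le> cmax m n u" using le_cmax[OF n less(2,3)] v unfolding c'_def by auto
      then show ?thesis using cmax_stable[OF n] unfolding stable_def by (meson le_less_trans)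
    qed
    have "chain_step m n c c'"
      unfolding chain_step_def stabilises_to_def using less(2,3) v(1) sc' c'_def by blast
    moreover have "(\<Sum>v\<in>nonsink m n. cmax m n v - c' v) < (\<Sum>v\<in>nonsink m n. cmax m n v - c v)"
    proof (rule sum_strict_mono_ex1)
      show "\<forall>x\<in>nonsink m n. cmax m n x - c' x \<le> cmax m n x - c x" unfolding c'_def by auto
      show "\<exists>a\<in>nonsink m n. cmax m n a - c' a < cmax m n a - c a"
        using v unfolding c'_def by (intro bexI[of _ v]) auto
    qed simp
    ultimately show ?thesis using less(1)[OF _ vc' sc'] by (meson converse_rtranclp_into_rtranclp)
  qed
qed

lemma add_reach:
  assumes n: "n \<ge> 1"
  shows "valid_cfg m n x \<Longrightarrow> stable m n x \<Longrightarrow> (\<forall>u. u \<notin> nonsink m n \<longrightarrow> a u = 0)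
     \<Longrightarrow> (topple_step m n)\<^sup>*\<^sup>* (cadd x a) d \<Longrightarrow> stable m n d \<Longrightarrow> (chain_step m n)\<^sup>*\<^sup>* x d"
proof (induction "\<Sum>v\<in>nonsink m n. a v" arbitrary: a x rule: less_induct)
  case less
  show ?case
  proof (cases "\<forall>v\<in>nonsink m n. a v = 0")
    case True
    then have "cadd x a = x" using less(4) unfolding cadd_def by (auto simp: fun_eq_iff)
    then have "d = x" using less(5) stable_rtranclp[OF less(3)] by simp
    then show ?thesis by simp
  next
    case False
    then obtain v where v: "v \<in> nonsink m n" "a v > 0" by auto
    define x1 where "x1 = x(v := Suc (x v))"
    define a' where "a' = a(v := a v - 1)"
    obtain d1 where d1: "stabilises_to m n x1 d1" using stab_exists[OF n] by blast
    have cs: "chain_step m n x d1" unfolding chain_step_def using less(2,3) v(1) d1 x1_def by blast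
    have vd1: "valid_cfg m n d1" "stable m n d1" using chain_step_vs[OF cs] by auto
    have eq: "cadd x1 a' = cadd x a" using v unfolding x1_def a'_def cadd_def by (auto simp: fun_eq_iff)
    have t1: "(topple_step m n)\<^sup>*\<^sup>* (cadd x a) (cadd d1 a')"
      using topples_cadd[of m n x1 d1 a'] d1 eq unfolding stabilises_to_def by simp
    obtain d' where d': "stabilises_to m n (cadd d1 a') d'" using stab_exists[OF n] by blast
    have "d' = d" using stab_unique[of m n "cadd x a" d' d] t1 d' less(5,6)
      unfolding stabilises_to_def by (meson rtranclp_trans)
    then have t2: "(topple_step m n)\<^sup>*\<^sup>* (cadd d1 a') d" using d' unfolding stabilises_to_def by simp
    have a'0: "\<forall>u. u \<notin> nonsink m n \<longrightarrow> a' u = 0" using less(4) v unfolding a'_def by auto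
    have lt: "(\<Sum>v\<in>nonsink m n. a' v) < (\<Sum>v\<in>nonsink m n. a v)"
    proof (rule sum_strict_mono_ex1)
      show "\<forall>x\<in>nonsink m n. a' x \<le> a x" unfolding a'_def by auto
      show "\<exists>x\<in>nonsink m n. a' x < a x" using v unfolding a'_def by (intro bexI[of _ v]) auto
    qed simp
    have "(chain_step m n)\<^sup>*\<^sup>* d1 d" using less(1)[OF lt vd1 a'0 t2 less(6)] .
    then show ?thesis using cs by (meson converse_rtranclp_into_rtranclp)
  qed
qed

lemma det_rec_iff:
  assumes n: "n \<ge> 1"
  shows "det_recurrent m n c \<longleftrightarrow> valid_cfg m n c \<and> stable m n c \<and> (chain_step m n)\<^sup>*\<^sup>* (cmax m n) c"
proof
  assume "det_recurrent m n c"
  then show "valid_cfg m n c \<and> stable m n c \<and> (chain_step m n)\<^sup>*\<^sup>* (cmax m n) c"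
    using reach_cmax[OF n] unfolding det_recurrent_def by blast
next
  assume h: "valid_cfg m n c \<and> stable m n c \<and> (chain_step m n)\<^sup>*\<^sup>* (cmax m n) c"
  show "det_recurrent m n c" unfolding det_recurrent_def
  proof (intro conjI allI impI)
    fix d assume "(chain_step m n)\<^sup>*\<^sup>* c d"
    then have "valid_cfg m n d \<and> stable m n d" using chains_vs h by blast
    then have "(chain_step m n)\<^sup>*\<^sup>* d (cmax m n)" using reach_cmax[OF n] by blast
    then show "(chain_step m n)\<^sup>*\<^sup>* d c" using h by (meson rtranclp_trans)
  qed (use h in auto)
qed

definition fsc :: "nat \<Rightarrow> nat \<Rightarrow> config \<Rightarrow> nat set \<Rightarrow> nat set \<Rightarrow> bool" where
  "fsc m n c I J = (I \<subseteq> {1..m} \<and> J \<subseteq> {1..n} \<and> (I \<noteq> {} \<or> J \<noteq> {}) \<and>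
      (\<forall>i\<in>I. c (T i) < card J) \<and> (\<forall>j\<in>J. c (B j) < card I))"

definition nofsc :: "nat \<Rightarrow> nat \<Rightarrow> config \<Rightarrow> bool" where
  "nofsc m n c = (\<forall>I J. \<not> fsc m n c I J)"

lemma nofsc_mono: "nofsc m n c \<Longrightarrow> (\<forall>u. c u \<le> c' u) \<Longrightarrow> nofsc m n c'"
  unfolding nofsc_def fsc_def by (meson le_less_trans)

lemma nofsc_topple:
  assumes st: "topple_step m n c c'" and nf: "nofsc m n c"
  shows "nofsc m n c'"
proof (rule ccontr)
  assume "\<not> nofsc m n c'"
  then obtain I J where f: "fsc m n c' I J" unfolding nofsc_def by blast
  then have IJ: "I \<subseteq> {1..m}" "J \<subseteq> {1..n}" "I \<noteq> {} \<or> J \<noteq> {}"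
    "\<forall>i\<in>I. c' (T i) < card J" "\<forall>j\<in>J. c' (B j) < card I" unfolding fsc_def by auto
  have fI: "finite I" "finite J" using IJ(1,2) finite_subset by auto
  obtain v where v: "v \<in> nonsink m n" "deg m n v \<le> c v" "c' = topple m n v c"
    using st unfolding topple_step_def by blast
  show False
  proof (cases v)
    case (T i0)
    with v have i0: "1 \<le> i0" "i0 \<le> m" and ci0: "n \<le> c (T i0)" by (auto simp: deg_T)
    have cT: "c' (T i) = (if i = i0 then c (T i0) - n else c (T i))" for i
      using v(3) T i0 by (simp add: topple_T)
    have cB: "j \<in> J \<Longrightarrow> c' (B j) = Suc (c (B j))" for j
      using v(3) T i0 IJ(2) by (auto simp: topple_T)
    show False
    proof (cases "i0 \<in> I")
      case False
      have "fsc m n c I J" unfolding fsc_def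
      proof (intro conjI ballI)
        fix i assume "i \<in> I" then show "c (T i) < card J" using IJ(4) cT[of i] False by (auto split: if_splits)
      next
        fix j assume "j \<in> J" then show "c (B j) < card I" using IJ(5) cB[of j] by fastforce
      qed (use IJ in auto)
      then show False using nf unfolding nofsc_def by blast
    next
      case True
      have cI: "card I = Suc (card (I - {i0}))" using True fI by (metis card_Suc_Diff1)
      have "fsc m n c (I - {i0}) J" unfolding fsc_def
      proof (intro conjI ballI)
        fix i assume "i \<in> I - {i0}" then show "c (T i) < card J" using IJ(4) cT[of i] by auto
      next
        fix j assume "j \<in> J" then show "c (B j) < card (I - {i0})" using IJ(5) cB[of j] cI by fastforce
      next
        show "I - {i0} \<noteq> {} \<or> J \<noteq> {}"
        proof (rule ccontr)
          assume "\<not> (I - {i0} \<noteq> {} \<or> J \<noteq> {})"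
          then have "J = {}" by auto
          then show False using IJ(4) True by auto
        qed
      qed (use IJ in auto)
      then show False using nf unfolding nofsc_def by blast
    qed
  next
    case (B j0)
    with v have j0: "1 \<le> j0" "j0 \<le> n" and cj0: "Suc m \<le> c (B j0)" by (auto simp: deg_B)
    have cB: "c' (B j) = (if j = j0 then c (B j0) - Suc m else c (B j))" for j
      using v(3) B j0 by (simp add: topple_B)
    have cT: "i \<in> I \<Longrightarrow> c' (T i) = Suc (c (T i))" for i
      using v(3) B j0 IJ(1) by (auto simp: topple_B)
    show False
    proof (cases "j0 \<in> J")
      case False
      have "fsc m n c I J" unfolding fsc_def
      proof (intro conjI ballI)
        fix j assume "j \<in> J" then show "c (B j) < card I" using IJ(5) cB[of j] False by (auto split: if_splits)
      next
        fix i assume "i \<in> I" then show "c (T i) < card J" using IJ(4) cT[of i] by fastforce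
      qed (use IJ in auto)
      then show False using nf unfolding nofsc_def by blast
    next
      case True
      have cJ: "card J = Suc (card (J - {j0}))" using True fI by (metis card_Suc_Diff1)
      have "fsc m n c I (J - {j0})" unfolding fsc_def
      proof (intro conjI ballI)
        fix j assume "j \<in> J - {j0}" then show "c (B j) < card I" using IJ(5) cB[of j] by auto
      next
        fix i assume "i \<in> I" then show "c (T i) < card (J - {j0})" using IJ(4) cT[of i] cJ by fastforce
      next
        show "I \<noteq> {} \<or> J - {j0} \<noteq> {}"
        proof (rule ccontr)
          assume "\<not> (I \<noteq> {} \<or> J - {j0} \<noteq> {})"
          then have "I = {}" by auto
          then show False using IJ(5) True by auto
        qed
      qed (use IJ in auto)
      then show False using nf unfolding nofsc_def by blast
    qed
  qed
qed

lemma nofsc_topples: "(topple_step m n)\<^sup>*\<^sup>* c c' \<Longrightarrow> nofsc m n c \<Longrightarrow> nofsc m n c'"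
  by (induction rule: rtranclp_induct) (auto intro: nofsc_topple)

lemma nofsc_cmax: "nofsc m n (cmax m n)"
  unfolding nofsc_def fsc_def
proof (intro allI notI)
  fix I J
  assume h: "I \<subseteq> {1..m} \<and> J \<subseteq> {1..n} \<and> (I \<noteq> {} \<or> J \<noteq> {}) \<and>
      (\<forall>i\<in>I. cmax m n (T i) < card J) \<and> (\<forall>j\<in>J. cmax m n (B j) < card I)"
  show False
  proof (cases "J = {}")
    case True
    then obtain i where "i \<in> I" using h by auto
    then show False using h True by auto
  next
    case False
    then obtain j where j: "j \<in> J" by auto
    have "j \<in> {1..n}" using h j by auto
    then have "cmax m n (B j) = m" unfolding cmax_def by auto
    then have "m < card I" using h j by metis
    moreover have "card I \<le> m" using h card_mono[of "{1..m}" I] by auto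
    ultimately show False by simp
  qed
qed

lemma nofsc_chain_step: "chain_step m n c d \<Longrightarrow> nofsc m n c \<Longrightarrow> nofsc m n d"
proof -
  assume cs: "chain_step m n c d" and nf: "nofsc m n c"
  then obtain v where v: "stabilises_to m n (c(v := Suc (c v))) d" unfolding chain_step_def by blast
  have "nofsc m n (c(v := Suc (c v)))" using nofsc_mono[OF nf] by simp
  then show ?thesis using v nofsc_topples unfolding stabilises_to_def by blast
qed

lemma nofsc_chains: "(chain_step m n)\<^sup>*\<^sup>* c d \<Longrightarrow> nofsc m n c \<Longrightarrow> nofsc m n d"
  by (induction rule: rtranclp_induct) (auto intro: nofsc_chain_step)

lemma det_rec_nofsc: "n \<ge> 1 \<Longrightarrow> det_recurrent m n c \<Longrightarrow> nofsc m n c"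
  using det_rec_iff nofsc_chains nofsc_cmax by blast

lemma burn:
  assumes nf: "nofsc m n c" and vc: "valid_cfg m n c"
  shows "I \<subseteq> {1..m} \<Longrightarrow> J \<subseteq> {1..n} \<Longrightarrow> valid_cfg m n x
    \<Longrightarrow> (\<forall>i. 1 \<le> i \<and> i \<le> m \<longrightarrow> x (T i) + (if i \<in> I then n else 0) = c (T i) + card J)
    \<Longrightarrow> (\<forall>j. 1 \<le> j \<and> j \<le> n \<longrightarrow> x (B j) + (if j \<in> J then Suc m else 0) = c (B j) + 1 + card I)
    \<Longrightarrow> (topple_step m n)\<^sup>*\<^sup>* x c"
proof (induction "(m - card I) + (n - card J)" arbitrary: I J x rule: less_induct)
  case less
  have fI: "finite I" "finite J" using less(2,3) finite_subset by auto
  have cI: "card I \<le> m" using card_mono[OF _ less(2)] by simp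
  have cJ: "card J \<le> n" using card_mono[OF _ less(3)] by simp
  show ?case
  proof (cases "I = {1..m} \<and> J = {1..n}")
    case True
    have "x = c"
    proof
      fix u show "x u = c u"
      proof (cases u)
        case (T i) then show ?thesis using less(4,5) vc True unfolding valid_iff
          by (cases "1 \<le> i \<and> i \<le> m") auto
      next
        case (B j) then show ?thesis using less(4,6) vc True unfolding valid_iff
          by (cases "1 \<le> j \<and> j \<le> n") auto
      qed
    qed
    then show ?thesis by simp
  next
    case False
    have ne: "{1..m} - I \<noteq> {} \<or> {1..n} - J \<noteq> {}" using False less(2,3) by blast
    have c1: "card ({1..m} - I) = m - card I" using less(2) fI by (simp add: card_Diff_subset)
    have c2: "card ({1..n} - J) = n - card J" using less(3) fI by (simp add: card_Diff_subset)
    have "\<not> fsc m n c ({1..m} - I) ({1..n} - J)" using nf unfolding nofsc_def by blast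
    then have "(\<exists>i\<in>{1..m} - I. n - card J \<le> c (T i)) \<or> (\<exists>j\<in>{1..n} - J. m - card I \<le> c (B j))"
      using ne unfolding fsc_def c1 c2 by (auto simp: not_less)
    then show ?thesis
    proof
      assume "\<exists>i\<in>{1..m} - I. n - card J \<le> c (T i)"
      then obtain i where i: "1 \<le> i" "i \<le> m" "i \<notin> I" "n - card J \<le> c (T i)" by auto
      have xi: "x (T i) = c (T i) + card J" using less(5) i by auto
      then have xin: "n \<le> x (T i)" using i(4) by simp
      define x' where "x' = topple m n (T i) x"
      have st: "topple_step m n x x'" unfolding topple_step_def x'_def using i xin deg_T[of i m n] by (intro bexI[of _ "T i"]) auto
      have x'T: "x' (T i') = (if i' = i then x (T i) - n else x (T i'))" for i'
        unfolding x'_def using i by (simp add: topple_T)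
      have x'B: "1 \<le> j \<Longrightarrow> j \<le> n \<Longrightarrow> x' (B j) = Suc (x (B j))" for j
        unfolding x'_def using i by (simp add: topple_T)
      have cI': "card (insert i I) = Suc (card I)" using fI i by simp
      have sub: "insert i I \<subseteq> {1..m}" using less(2) i by auto
      have cI'm: "card (insert i I) \<le> m" using card_mono[OF _ sub] by simp
      have "(topple_step m n)\<^sup>*\<^sup>* x' c"
      proof (rule less(1)[of "insert i I" J x'])
        show "m - card (insert i I) + (n - card J) < m - card I + (n - card J)" using cI' cI'm by simp
        show "valid_cfg m n x'" using topple_step_valid[OF st less(4)] .
        show "\<forall>i'. 1 \<le> i' \<and> i' \<le> m \<longrightarrow> x' (T i') + (if i' \<in> insert i I then n else 0) = c (T i') + card J"
          using less(5) x'T xi xin by auto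
        show "\<forall>j. 1 \<le> j \<and> j \<le> n \<longrightarrow> x' (B j) + (if j \<in> J then Suc m else 0) = c (B j) + 1 + card (insert i I)"
          using less(6) x'B cI' by auto
      qed (use sub less(3) in auto)
      then show ?thesis using st by (meson converse_rtranclp_into_rtranclp)
    next
      assume "\<exists>j\<in>{1..n} - J. m - card I \<le> c (B j)"
      then obtain j where j: "1 \<le> j" "j \<le> n" "j \<notin> J" "m - card I \<le> c (B j)" by auto
      have xj: "x (B j) = c (B j) + 1 + card I" using less(6) j by auto
      then have xjn: "Suc m \<le> x (B j)" using j(4) by simp
      define x' where "x' = topple m n (B j) x"
      have st: "topple_step m n x x'" unfolding topple_step_def x'_def using j xjn deg_B[of j n m] by (intro bexI[of _ "B j"]) auto
      have x'B: "x' (B j') = (if j' = j then x (B j) - Suc m else x (B j'))" for j'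
        unfolding x'_def using j by (simp add: topple_B)
      have x'T: "1 \<le> i \<Longrightarrow> i \<le> m \<Longrightarrow> x' (T i) = Suc (x (T i))" for i
        unfolding x'_def using j by (simp add: topple_B)
      have cJ': "card (insert j J) = Suc (card J)" using fI j by simp
      have sub: "insert j J \<subseteq> {1..n}" using less(3) j by auto
      have cJ'n: "card (insert j J) \<le> n" using card_mono[OF _ sub] by simp
      have "(topple_step m n)\<^sup>*\<^sup>* x' c"
      proof (rule less(1)[of I "insert j J" x'])
        show "m - card I + (n - card (insert j J)) < m - card I + (n - card J)" using cJ' cJ'n by simp
        show "valid_cfg m n x'" using topple_step_valid[OF st less(4)] .
        show "\<forall>j'. 1 \<le> j' \<and> j' \<le> n \<longrightarrow> x' (B j') + (if j' \<in> insert j J then Suc m else 0) = c (B j') + 1 + card I"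
          using less(6) x'B xj xjn by auto
        show "\<forall>i. 1 \<le> i \<and> i \<le> m \<longrightarrow> x' (T i) + (if i \<in> I then n else 0) = c (T i) + card (insert j J)"
          using less(5) x'T cJ' by auto
      qed (use sub less(2) in auto)
      then show ?thesis using st by (meson converse_rtranclp_into_rtranclp)
    qed
  qed
qed

definition beta :: "nat \<Rightarrow> nat \<Rightarrow> nat \<Rightarrow> config" where
  "beta m n k = (\<lambda>u. case u of T i \<Rightarrow> 0 | B j \<Rightarrow> if 1 \<le> j \<and> j \<le> n then k else 0)"

lemma burn_rounds:
  assumes nf: "nofsc m n c" and vc: "valid_cfg m n c"
  shows "(topple_step m n)\<^sup>*\<^sup>* (cadd c (beta m n k)) c"
proof (induction k)
  case 0
  have "cadd c (beta m n 0) = c" unfolding cadd_def beta_def by (auto simp: fun_eq_iff split: vtx.split)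
  then show ?case by simp
next
  case (Suc k)
  have v1: "valid_cfg m n (cadd c (beta m n 1))" using vc unfolding valid_iff cadd_def beta_def by auto
  have one: "(topple_step m n)\<^sup>*\<^sup>* (cadd c (beta m n 1)) c"
    by (rule burn[OF nf vc, of "{}" "{}"]) (use v1 in \<open>auto simp: cadd_def beta_def\<close>)
  have eq: "cadd (cadd c (beta m n 1)) (beta m n k) = cadd c (beta m n (Suc k))"
    unfolding cadd_def beta_def by (auto simp: fun_eq_iff split: vtx.split)
  have "(topple_step m n)\<^sup>*\<^sup>* (cadd c (beta m n (Suc k))) (cadd c (beta m n k))"
    using topples_cadd[OF one, of "beta m n k"] eq by simp
  then show ?case using Suc by (meson rtranclp_trans)
qed

definition xA :: "nat \<Rightarrow> nat \<Rightarrow> config \<Rightarrow> nat \<Rightarrow> config" where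
  "xA m n c k = (\<lambda>u. case u of T i \<Rightarrow> if 1 \<le> i \<and> i \<le> m \<and> k < i then c u + n else c u
                       | B j \<Rightarrow> if 1 \<le> j \<and> j \<le> n then c u + Suc m + k else c u)"

lemma stepA: "k \<le> m \<Longrightarrow> (topple_step m n)\<^sup>*\<^sup>* (xA m n c 0) (xA m n c k)"
proof (induction k)
  case 0 then show ?case by simp
next
  case (Suc k)
  have st: "topple_step m n (xA m n c k) (xA m n c (Suc k))"
    unfolding topple_step_def
  proof (intro bexI conjI)
    show "deg m n (T (Suc k)) \<le> xA m n c k (T (Suc k))" using Suc(2) by (simp add: deg_T xA_def)
    show "xA m n c (Suc k) = topple m n (T (Suc k)) (xA m n c k)"
      using Suc(2) by (auto simp: topple_T xA_def fun_eq_iff split: vtx.split)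
  qed (use Suc(2) in simp)
  then show ?case using Suc by (meson rtranclp.rtrancl_into_rtrancl Suc_leD)
qed

definition epsc :: "nat \<Rightarrow> nat \<Rightarrow> config" where
  "epsc m n = (\<lambda>u. case u of T i \<Rightarrow> if 1 \<le> i \<and> i \<le> m then n else 0
                          | B j \<Rightarrow> if 1 \<le> j \<and> j \<le> n then Suc m else 0)"

lemma eps_topples:
  assumes nf: "nofsc m n c" and vc: "valid_cfg m n c"
  shows "(topple_step m n)\<^sup>*\<^sup>* (cadd c (epsc m n)) c"
proof -
  have e0: "xA m n c 0 = cadd c (epsc m n)" unfolding xA_def cadd_def epsc_def
    by (auto simp: fun_eq_iff split: vtx.split)
  have em: "xA m n c m = cadd c (beta m n (2*m+1))" unfolding xA_def cadd_def beta_def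
    using vc unfolding valid_iff by (auto simp: fun_eq_iff split: vtx.split)
  show ?thesis using stepA[of m m n c] e0 em burn_rounds[OF nf vc, of "2*m+1"]
    by (metis le_refl rtranclp_trans)
qed

lemma nofsc_det_rec:
  assumes n: "n \<ge> 1" and nf: "nofsc m n c" and vc: "valid_cfg m n c" and sc: "stable m n c"
  shows "det_recurrent m n c"
proof -
  define a where "a = (\<lambda>u. if u \<in> nonsink m n then c u + epsc m n u - cmax m n u else 0)"
  have eq: "cadd (cmax m n) a = cadd c (epsc m n)"
  proof
    fix u show "cadd (cmax m n) a u = cadd c (epsc m n) u"
    proof (cases u)
      case (T i) then show ?thesis using vc n unfolding a_def cadd_def cmax_def epsc_def valid_iff
        by (cases "1 \<le> i \<and> i \<le> m") auto
    next
      case (B j) then show ?thesis using vc n unfolding a_def cadd_def cmax_def epsc_def valid_iff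
        by (cases "1 \<le> j \<and> j \<le> n") auto
    qed
  qed
  have "(chain_step m n)\<^sup>*\<^sup>* (cmax m n) c"
  proof (rule add_reach[OF n cmax_valid cmax_stable[OF n]])
    show "\<forall>u. u \<notin> nonsink m n \<longrightarrow> a u = 0" unfolding a_def by simp
    show "(topple_step m n)\<^sup>*\<^sup>* (cadd (cmax m n) a) c" using eq eps_topples[OF nf vc] by simp
    show "stable m n c" by (rule sc)
  qed
  then show ?thesis using det_rec_iff[OF n] vc sc by blast
qed

lemma det_rec_iff_nofsc:
  "n \<ge> 1 \<Longrightarrow> det_recurrent m n c \<longleftrightarrow> valid_cfg m n c \<and> stable m n c \<and> nofsc m n c"
  using det_rec_nofsc nofsc_det_rec det_rec_iff by blast

fun hts :: "('a \<Rightarrow> bool) \<Rightarrow> nat \<Rightarrow> 'a list \<Rightarrow> nat list" where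
  "hts P k [] = []"
| "hts P k (x # xs) = (if P x then k # hts P k xs else hts P (Suc k) xs)"

lemma positions_Nil[simp]: "positions P [] = []"
  unfolding positions_def by simp

lemma positions_Cons:
  "positions P (x # w) = (if P x then 0 # map Suc (positions P w) else map Suc (positions P w))"
proof -
  have "[0..<length (x # w)] = 0 # map Suc [0..<length w]"
    by (simp add: upt_conv_Cons map_Suc_upt del: upt_Suc)
  then show ?thesis unfolding positions_def by (simp add: filter_map comp_def)
qed

lemma length_positions: "length (positions P w) = length (filter P w)"
  by (induction w) (simp_all add: positions_Cons)

lemma count_before_0[simp]: "count_before Q w 0 = 0"
  unfolding count_before_def by simp

lemma count_before_Cons_Suc:
  "count_before Q (x # w) (Suc j) = (if Q x then 1 else 0) + count_before Q w j"
  unfolding count_before_def by simp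

lemma hts_positions:
  assumes "\<And>s. Q s \<longleftrightarrow> \<not> P s"
  shows "map (\<lambda>j. k + count_before Q w j) (positions P w) = hts P k w"
  using assms
proof (induction w arbitrary: k)
  case Nil then show ?case by simp
next
  case (Cons x w)
  show ?case
  proof (cases "P x")
    case True then show ?thesis using Cons.IH[of k] Cons.prems by (simp add: positions_Cons count_before_Cons_Suc comp_def)
  next
    case False then show ?thesis using Cons.IH[of "Suc k"] Cons.prems by (simp add: positions_Cons count_before_Cons_Suc comp_def)
  qed
qed

lemma length_hts: "length (hts P k w) = length (filter P w)"
  by (induction w arbitrary: k) auto

lemma hts_bounds: "h \<in> set (hts P k w) \<Longrightarrow> k \<le> h \<and> h \<le> k + length (filter (\<lambda>s. \<not> P s) w)"
  by (induction w arbitrary: k) (auto, fastforce+)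

lemma sorted_hts: "sorted (hts P k w)"
  by (induction w arbitrary: k) (auto dest: hts_bounds)

lemma hts_Suc: "hts P (Suc k) w = map Suc (hts P k w)"
  by (induction w arbitrary: k) auto

lemma path_at_shift: "k < h \<Longrightarrow> path_at b a k (h # hs) tp = b # path_at b a (Suc k) (h # hs) tp"
  by (simp add: Suc_diff_Suc replicate_Suc[symmetric] del: replicate_Suc)

lemma path_at_hts:
  "path_at b a k (hts P k w @ [k + length (filter (\<lambda>s. \<not> P s) w)]) (k + length (filter (\<lambda>s. \<not> P s) w))
     = map (\<lambda>s. if P s then a else b) w @ [a]"
proof (induction w arbitrary: k)
  case Nil then show ?case by simp
next
  case (Cons x w)
  show ?case
  proof (cases "P x")
    case True then show ?thesis using Cons[of k] by simp
  next
    case False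
    let ?t = "Suc k + length (filter (\<lambda>s. \<not> P s) w)"
    have "path_at b a k (hts P (Suc k) w @ [?t]) ?t = b # path_at b a (Suc k) (hts P (Suc k) w @ [?t]) ?t"
    proof (cases "hts P (Suc k) w")
      case Nil then show ?thesis using path_at_shift[of k ?t b a "[]" ?t] by simp
    next
      case (Cons h hs)
      then have "Suc k \<le> h" using hts_bounds[of h P "Suc k" w] by simp
      then show ?thesis using Cons path_at_shift[of k h b a "hs @ [?t]" ?t] by simp
    qed
    then show ?thesis using Cons[of "Suc k"] False by simp
  qed
qed

lemma hts_replicate: "\<not> P b \<Longrightarrow> hts P k (replicate r b @ xs) = hts P (k + r) xs"
  by (induction r arbitrary: k) auto

lemma hts_replicate0: "\<not> P b \<Longrightarrow> hts P k (replicate r b) = []"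
  by (induction r arbitrary: k) auto

lemma path_at_props:
  assumes "a \<noteq> b"
  shows "sorted hs \<Longrightarrow> (\<forall>h\<in>set hs. k \<le> h \<and> h \<le> tp) \<Longrightarrow> k \<le> tp \<Longrightarrow>
    hts (\<lambda>d. d = a) k (path_at b a k hs tp) = hs \<and>
    length (path_at b a k hs tp) = length hs + (tp - k) \<and>
    length (filter (\<lambda>d. d = a) (path_at b a k hs tp)) = length hs \<and>
    length (filter (\<lambda>d. d = b) (path_at b a k hs tp)) = tp - k"
proof (induction hs arbitrary: k)
  case Nil then show ?case using assms by (simp add: hts_replicate0)
next
  case (Cons h hs)
  have kh: "k \<le> h" "h \<le> tp" using Cons(3) by auto
  have IH: "hts (\<lambda>d. d = a) h (path_at b a h hs tp) = hs \<and>
    length (path_at b a h hs tp) = length hs + (tp - h) \<and>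
    length (filter (\<lambda>d. d = a) (path_at b a h hs tp)) = length hs \<and>
    length (filter (\<lambda>d. d = b) (path_at b a h hs tp)) = tp - h"
    using Cons by auto
  have "hts (\<lambda>d. d = a) k (replicate (h - k) b @ a # path_at b a h hs tp) = h # hs"
    using hts_replicate[of "\<lambda>d. d = a" b k "h - k"] assms IH kh by auto
  then show ?case using IH kh assms by auto
qed

abbreviation "PT \<equiv> (\<lambda>s. s = MD \<or> s = MHE)"
abbreviation "QT \<equiv> (\<lambda>s. s = MU \<or> s = MHN)"
abbreviation "PB \<equiv> (\<lambda>s. s = MD \<or> s = MHN)"
abbreviation "QB \<equiv> (\<lambda>s. s = MU \<or> s = MHE)"
abbreviation "cnt P xs \<equiv> length (filter P xs)"

lemma pos_nth:
  "k < length (positions P w) \<Longrightarrow> positions P w ! k < length w \<and> P (w ! (positions P w ! k))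
     \<and> cnt P (take (positions P w ! k) w) = k"
proof (induction w arbitrary: k)
  case Nil then show ?case by simp
next
  case (Cons x w)
  show ?case
  proof (cases "P x")
    case True
    show ?thesis
    proof (cases k)
      case 0 then show ?thesis using True by (simp add: positions_Cons)
    next
      case (Suc k')
      then have "k' < length (positions P w)" using Cons.prems True by (simp add: positions_Cons)
      then show ?thesis using Cons.IH[of k'] True Suc by (simp add: positions_Cons)
    qed
  next
    case False
    then have "k < length (positions P w)" using Cons.prems by (simp add: positions_Cons)
    then show ?thesis using Cons.IH[of k] False by (simp add: positions_Cons)
  qed
qed

lemma pos_of:
  "i < length w \<Longrightarrow> P (w ! i) \<Longrightarrow> cnt P (take i w) < length (positions P w)
     \<and> positions P w ! cnt P (take i w) = i"
proof (induction w arbitrary: i)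
  case Nil then show ?case by simp
next
  case (Cons x w)
  show ?case
  proof (cases i)
    case 0 then show ?thesis using Cons.prems by (simp add: positions_Cons)
  next
    case (Suc i')
    then have "i' < length w" "P (w ! i')" using Cons.prems by auto
    then show ?thesis using Cons.IH[of i'] Suc by (simp add: positions_Cons)
  qed
qed

lemma cnt_take_mono: "i \<le> j \<Longrightarrow> cnt P (take i w) \<le> cnt P (take j w)"
proof -
  assume "i \<le> j"
  then obtain d where "j = i + d" using le_Suc_ex by blast
  then show ?thesis by (simp add: take_add)
qed

lemma cnt_PT: "cnt PT xs = cnt (\<lambda>s. s = MD) xs + cnt (\<lambda>s. s = MHE) xs"
  by (induction xs) auto
lemma cnt_QT: "cnt QT xs = cnt (\<lambda>s. s = MU) xs + cnt (\<lambda>s. s = MHN) xs"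
  by (induction xs) auto
lemma cnt_PB: "cnt PB xs = cnt (\<lambda>s. s = MD) xs + cnt (\<lambda>s. s = MHN) xs"
  by (induction xs) auto
lemma cnt_QB: "cnt QB xs = cnt (\<lambda>s. s = MU) xs + cnt (\<lambda>s. s = MHE) xs"
  by (induction xs) auto
lemma cnt_all: "length xs = cnt (\<lambda>s. s = MU) xs + cnt (\<lambda>s. s = MD) xs + cnt (\<lambda>s. s = MHN) xs + cnt (\<lambda>s. s = MHE) xs"
proof (induction xs)
  case Nil then show ?case by simp
next
  case (Cons x xs) then show ?case by (cases x) auto
qed
lemma height_cnt: "height xs = int (cnt (\<lambda>s. s = MU) xs) - int (cnt (\<lambda>s. s = MD) xs)"
proof (induction xs)
  case Nil then show ?case by (simp add: height_def)
next
  case (Cons x xs) then show ?case by (cases x) (auto simp: height_def)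
qed

lemma height_take_Suc: "j < length w \<Longrightarrow> height (take (Suc j) w) = height (take j w) + hstep (w ! j)"
  by (simp add: take_Suc_conv_app_nth height_def)

lemma notPT: "(\<lambda>s. \<not> PT s) = QT" by (auto simp: fun_eq_iff intro: mstep.exhaust)
lemma notPB: "(\<lambda>s. \<not> PB s) = QB" by (auto simp: fun_eq_iff intro: mstep.exhaust)
lemma QT_iff: "QT s \<longleftrightarrow> \<not> PT s" by (cases s) auto
lemma QB_iff: "QB s \<longleftrightarrow> \<not> PB s" by (cases s) auto

lemma cfg_T: "1 \<le> i \<Longrightarrow> i \<le> m \<Longrightarrow> cfg_of m n w (T i) = count_before QT w (positions PT w ! (i - 1))"
  unfolding cfg_of_def by simp
lemma cfg_B: "1 \<le> j \<Longrightarrow> j < n \<Longrightarrow> cfg_of m n w (B j) = count_before QB w (positions PB w ! (j - 1))"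
  unfolding cfg_of_def by simp
lemma cfg_Bn: "1 \<le> n \<Longrightarrow> cfg_of m n w (B n) = m"
  unfolding cfg_of_def by simp

lemma motz_counts:
  assumes "w \<in> Motz m k"
  shows "cnt PT w = m" "cnt QT w = k" "cnt PB w = k" "cnt QB w = m" "length w = m + k"
proof -
  have a: "length w = m + k" "cnt QB w = m" "height w = 0" using assms unfolding Motz_def by auto
  note c = cnt_all[of w] height_cnt[of w] cnt_QB[of w]
  show "cnt PT w = m" using a c cnt_PT[of w] by linarith
  show "cnt QT w = k" using a c cnt_QT[of w] by linarith
  show "cnt PB w = k" using a c cnt_PB[of w] by linarith
  show "cnt QB w = m" using a by simp
  show "length w = m + k" using a by simp
qed

lemma map_nth_shift: "length xs = L \<Longrightarrow> map (\<lambda>i. f (xs ! (i - 1))) [1..<Suc L] = map f xs"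
  by (rule nth_equalityI) (simp_all del: upt_Suc add: nth_upt)

lemma cfg_T_list:
  assumes "cnt PT w = m"
  shows "map (\<lambda>i. cfg_of m n w (T i)) [1..<Suc m] = hts PT 0 w"
proof -
  have "map (\<lambda>i. cfg_of m n w (T i)) [1..<Suc m] = map (\<lambda>i. count_before QT w (positions PT w ! (i - 1))) [1..<Suc m]"
    by (rule map_cong) (auto simp: cfg_T)
  also have "\<dots> = map (count_before QT w) (positions PT w)"
    using map_nth_shift[of "positions PT w" m "count_before QT w"] assms by (simp add: length_positions)
  also have "\<dots> = hts PT 0 w" using hts_positions[of QT PT 0 w] QT_iff by simp
  finally show ?thesis .
qed

lemma cfg_B_list:
  assumes "cnt PB w = n - 1" "n \<ge> 1"
  shows "map (\<lambda>j. cfg_of m n w (B j)) [1..<n] = hts PB 0 w"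
proof -
  have "map (\<lambda>j. cfg_of m n w (B j)) [1..<Suc (n-1)] = map (\<lambda>j. count_before QB w (positions PB w ! (j - 1))) [1..<Suc (n-1)]"
    by (rule map_cong) (auto simp: cfg_B)
  also have "\<dots> = map (count_before QB w) (positions PB w)"
    using map_nth_shift[of "positions PB w" "n-1" "count_before QB w"] assms by (simp add: length_positions)
  also have "\<dots> = hts PB 0 w" using hts_positions[of QB PB 0 w] QB_iff by simp
  finally show ?thesis using assms by simp
qed

definition condC :: "nat \<Rightarrow> nat \<Rightarrow> config \<Rightarrow> bool" where
  "condC m n c = (\<forall>p q. 1 \<le> p \<and> p \<le> m \<and> 1 \<le> q \<and> q \<le> n \<longrightarrow> q \<le> c (T p) \<or> p \<le> c (B q))"

lemma sorted_T_mono: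
  assumes "sorted_cfg m n c" "1 \<le> i" "i \<le> i'" "i' \<le> m"
  shows "c (T i) \<le> c (T i')"
proof -
  have "i + d \<le> m \<Longrightarrow> c (T i) \<le> c (T (i + d))" for d
  proof (induction d)
    case 0 then show ?case by simp
  next
    case (Suc d)
    then have "c (T i) \<le> c (T (i + d))" by simp
    moreover have "c (T (i + d)) \<le> c (T (Suc (i + d)))"
      using assms(1,2) Suc.prems unfolding sorted_cfg_def by simp
    ultimately show ?case by simp
  qed
  from this[of "i' - i"] show ?thesis using assms by simp
qed

lemma sorted_B_mono:
  assumes "sorted_cfg m n c" "1 \<le> j" "j \<le> j'" "j' \<le> n"
  shows "c (B j) \<le> c (B j')"
proof -
  have "j + d \<le> n \<Longrightarrow> c (B j) \<le> c (B (j + d))" for d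
  proof (induction d)
    case 0 then show ?case by simp
  next
    case (Suc d)
    then have "c (B j) \<le> c (B (j + d))" by simp
    moreover have "c (B (j + d)) \<le> c (B (Suc (j + d)))"
      using assms(1,2) Suc.prems unfolding sorted_cfg_def by simp
    ultimately show ?case by simp
  qed
  from this[of "j' - j"] show ?thesis using assms by simp
qed

lemma card_le_Max: "finite I \<Longrightarrow> I \<subseteq> {1..m} \<Longrightarrow> I \<noteq> {} \<Longrightarrow> card I \<le> Max I \<and> Max I \<in> I"
proof -
  assume a: "finite I" "I \<subseteq> {1..m}" "I \<noteq> {}"
  have "I \<subseteq> {1..Max I}" using a by auto
  then have "card I \<le> card {1..Max I}" by (rule card_mono[rotated]) simp
  then show ?thesis using a by simp
qed

lemma C_nofsc:
  assumes s: "sorted_cfg m n c" and C: "condC m n c"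
  shows "nofsc m n c"
  unfolding nofsc_def fsc_def
proof (intro allI notI)
  fix I J assume h: "I \<subseteq> {1..m} \<and> J \<subseteq> {1..n} \<and> (I \<noteq> {} \<or> J \<noteq> {}) \<and>
      (\<forall>i\<in>I. c (T i) < card J) \<and> (\<forall>j\<in>J. c (B j) < card I)"
  have f: "finite I" "finite J" using h finite_subset by auto
  show False
  proof (cases "I = {}")
    case True
    then obtain j where "j \<in> J" using h by auto
    then show False using h True by auto
  next
    case False
    note I = card_le_Max[OF f(1) _ False, of m]
    show False
    proof (cases "J = {}")
      case True
      then obtain i where "i \<in> I" using False by auto
      then show False using h True by auto
    next
      case Jne: False
      note J = card_le_Max[OF f(2) _ Jne, of n]
      let ?p = "card I" and ?q = "card J"
      have p1: "1 \<le> ?p" using False f by (simp add: Suc_leI card_gt_0_iff)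
      have q1: "1 \<le> ?q" using Jne f by (simp add: Suc_leI card_gt_0_iff)
      have MI: "Max I \<le> m" "?p \<le> Max I" "Max I \<in> I" using I h by auto
      have MJ: "Max J \<le> n" "?q \<le> Max J" "Max J \<in> J" using J h by auto
      have "c (T ?p) \<le> c (T (Max I))" using sorted_T_mono[OF s p1 MI(2) MI(1)] .
      moreover have "c (T (Max I)) < ?q" using h MI(3) by auto
      moreover have "c (B ?q) \<le> c (B (Max J))" using sorted_B_mono[OF s q1 MJ(2) MJ(1)] .
      moreover have "c (B (Max J)) < ?p" using h MJ(3) by auto
      moreover have "?q \<le> c (T ?p) \<or> ?p \<le> c (B ?q)"
        using C p1 q1 MI MJ unfolding condC_def by (meson le_trans)
      ultimately show False by linarith
    qed
  qed
qed

lemma nofsc_C: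
  assumes s: "sorted_cfg m n c" and nf: "nofsc m n c"
  shows "condC m n c"
  unfolding condC_def
proof (intro allI impI)
  fix p q assume pq: "1 \<le> p \<and> p \<le> m \<and> 1 \<le> q \<and> q \<le> n"
  have "\<not> fsc m n c {1..p} {1..q}" using nf unfolding nofsc_def by blast
  then have "(\<exists>i\<in>{1..p}. q \<le> c (T i)) \<or> (\<exists>j\<in>{1..q}. p \<le> c (B j))"
    using pq unfolding fsc_def by (auto simp: not_less)
  then show "q \<le> c (T p) \<or> p \<le> c (B q)"
  proof
    assume "\<exists>i\<in>{1..p}. q \<le> c (T i)"
    then obtain i where "1 \<le> i" "i \<le> p" "q \<le> c (T i)" by auto
    then show ?thesis using sorted_T_mono[OF s, of i p] pq by auto
  next
    assume "\<exists>j\<in>{1..q}. p \<le> c (B j)"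
    then obtain j where "1 \<le> j" "j \<le> q" "p \<le> c (B j)" by auto
    then show ?thesis using sorted_B_mono[OF s, of j q] pq by auto
  qed
qed

lemma cfg_T_hts:
  assumes "cnt PT w = m" "1 \<le> i" "i \<le> m"
  shows "cfg_of m n w (T i) = hts PT 0 w ! (i - 1)"
proof -
  have "hts PT 0 w ! (i - 1) = map (\<lambda>i. cfg_of m n w (T i)) [1..<Suc m] ! (i - 1)"
    using cfg_T_list[OF assms(1)] by simp
  moreover have "[1..<Suc m] ! (i - 1) = i" using assms(2,3) by (simp del: upt_Suc)
  then have "map (\<lambda>i. cfg_of m n w (T i)) [1..<Suc m] ! (i - 1) = cfg_of m n w (T i)" using assms(2,3) by (simp del: upt_Suc)
  ultimately show ?thesis by simp
qed

lemma cfg_B_hts: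
  assumes "cnt PB w = n - 1" "n \<ge> 1" "1 \<le> j" "j < n"
  shows "cfg_of m n w (B j) = hts PB 0 w ! (j - 1)"
proof -
  have "hts PB 0 w ! (j - 1) = map (\<lambda>j. cfg_of m n w (B j)) [1..<n] ! (j - 1)"
    using cfg_B_list[OF assms(1,2)] by simp
  moreover have "[1..<n] ! (j - 1) = j" using assms(3,4) by (simp del: upt_Suc)
  then have "map (\<lambda>j. cfg_of m n w (B j)) [1..<n] ! (j - 1) = cfg_of m n w (B j)" using assms(3,4) by (simp del: upt_Suc)
  ultimately show ?thesis by simp
qed

lemma cfg_valid: "n \<ge> 1 \<Longrightarrow> valid_cfg m n (cfg_of m n w)"
  unfolding valid_iff cfg_of_def by auto

lemma cfg_props:
  assumes n: "n \<ge> 1" and PT: "cnt PT w = m" and PB: "cnt PB w = n - 1"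
    and QT: "cnt QT w = n - 1" and QB: "cnt QB w = m"
  shows "sorted_cfg m n (cfg_of m n w)" "stable m n (cfg_of m n w)"
proof -
  have lT: "length (hts PT 0 w) = m" using PT by (simp add: length_hts)
  have lB: "length (hts PB 0 w) = n - 1" using PB by (simp add: length_hts)
  have bT: "h \<le> n - 1" if "h \<in> set (hts PT 0 w)" for h
    using hts_bounds[OF that] QT notPT by simp
  have bB: "h \<le> m" if "h \<in> set (hts PB 0 w)" for h
    using hts_bounds[OF that] QB notPB by simp
  show "sorted_cfg m n (cfg_of m n w)" unfolding sorted_cfg_def
  proof (intro conjI allI impI)
    fix i assume i: "1 \<le> i \<and> i < m"
    then show "cfg_of m n w (T i) \<le> cfg_of m n w (T (Suc i))"
      using cfg_T_hts[OF PT, of i n] cfg_T_hts[OF PT, of "Suc i" n] sorted_hts[of PT 0 w] lT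
      by (auto simp: sorted_iff_nth_mono)
  next
    fix j assume j: "1 \<le> j \<and> j < n"
    show "cfg_of m n w (B j) \<le> cfg_of m n w (B (Suc j))"
    proof (cases "Suc j = n")
      case True
      have "j - 1 < length (hts PB 0 w)" using j lB by arith
      then have "cfg_of m n w (B j) \<in> set (hts PB 0 w)" using cfg_B_hts[OF PB n, of j m] j by simp
      then show ?thesis using bB True cfg_Bn[OF n, of m w] by simp
    next
      case False
      then show ?thesis
        using cfg_B_hts[OF PB n, of j m] cfg_B_hts[OF PB n, of "Suc j" m] sorted_hts[of PB 0 w] lB j
        by (auto simp: sorted_iff_nth_mono)
    qed
  qed
  show "stable m n (cfg_of m n w)" unfolding stable_iff
  proof (intro conjI allI impI)
    fix i assume i: "1 \<le> i \<and> i \<le> m"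
    have "i - 1 < length (hts PT 0 w)" using i lT by arith
    then have "cfg_of m n w (T i) \<in> set (hts PT 0 w)" using cfg_T_hts[OF PT, of i n] i by simp
    then show "cfg_of m n w (T i) < n" using bT n by fastforce
  next
    fix j assume j: "1 \<le> j \<and> j \<le> n"
    show "cfg_of m n w (B j) < Suc m"
    proof (cases "j = n")
      case True then show ?thesis using cfg_Bn[OF n] by simp
    next
      case False
      have "j - 1 < length (hts PB 0 w)" using False j lB by arith
      then have "cfg_of m n w (B j) \<in> set (hts PB 0 w)" using cfg_B_hts[OF PB n, of j m] False j by simp
      then show ?thesis using bB by fastforce
    qed
  qed
qed

lemma cnt_PT_QT: "cnt PT xs + cnt QT xs = length xs"
  using cnt_PT[of xs] cnt_QT[of xs] cnt_all[of xs] by linarith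
lemma cnt_PB_QB: "cnt PB xs + cnt QB xs = length xs"
  using cnt_PB[of xs] cnt_QB[of xs] cnt_all[of xs] by linarith

lemma cnt_take_Suc: "a < length w \<Longrightarrow> P (w ! a) \<Longrightarrow> cnt P (take (Suc a) w) = Suc (cnt P (take a w))"
  by (simp add: take_Suc_conv_app_nth)

lemma motz_C:
  assumes n: "n \<ge> 1" and w: "w \<in> Motz m (n - 1)"
  shows "condC m n (cfg_of m n w)"
  unfolding condC_def
proof (intro allI impI)
  fix p q assume pq: "1 \<le> p \<and> p \<le> m \<and> 1 \<le> q \<and> q \<le> n"
  let ?c = "cfg_of m n w"
  show "q \<le> ?c (T p) \<or> p \<le> ?c (B q)"
  proof (rule ccontr)
    assume ne: "\<not> (q \<le> ?c (T p) \<or> p \<le> ?c (B q))"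
    note mc = motz_counts[OF w]
    have qn: "q < n" using ne cfg_Bn[OF n, of m w] pq by (cases "q = n") auto
    define a where "a = positions PT w ! (p - 1)"
    have "p - 1 < length (positions PT w)" unfolding length_positions using pq mc by arith
    note pa = pos_nth[OF this, folded a_def]
    have cTp: "?c (T p) = cnt QT (take a w)" using cfg_T[of p m n w] pq unfolding a_def count_before_def by simp
    have la: "length (take a w) = a" using pa by simp
    have a_eq: "a = (p - 1) + ?c (T p)" using cnt_PT_QT[of "take a w"] pa la cTp by simp
    define b where "b = positions PB w ! (q - 1)"
    have "q - 1 < length (positions PB w)" unfolding length_positions using pq mc qn by arith
    note pb = pos_nth[OF this, folded b_def]
    have cBq: "?c (B q) = cnt QB (take b w)" using cfg_B[of q n m w] pq qn unfolding b_def count_before_def by simp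
    have lb: "length (take b w) = b" using pb by simp
    have b_eq: "b = (q - 1) + ?c (B q)" using cnt_PB_QB[of "take b w"] pb lb cBq by simp
    define j where "j = p + q - 1"
    have aj: "Suc a \<le> j" using a_eq ne pq unfolding j_def by linarith
    have bj: "Suc b \<le> j" using b_eq ne pq unfolding j_def by linarith
    have jl: "j \<le> length w" using pq qn mc unfolding j_def by linarith
    have c1: "p \<le> cnt PT (take j w)"
      using cnt_take_mono[OF aj, of PT w] cnt_take_Suc[of a w PT] pa pq by simp
    have c2: "q \<le> cnt PB (take j w)"
      using cnt_take_mono[OF bj, of PB w] cnt_take_Suc[of b w PB] pb pq by simp
    let ?xs = "take j w"
    have lx: "length ?xs = j" using jl by simp
    have "height ?xs < 0"
      using c1 c2 lx cnt_all[of ?xs] cnt_PT[of ?xs] cnt_PB[of ?xs] height_cnt[of ?xs] pq unfolding j_def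
      by linarith
    moreover have "0 \<le> height ?xs" using w jl unfolding Motz_def by auto
    ultimately show False by simp
  qed
qed

lemma C_motz_height:
  assumes n: "n \<ge> 1" and PT: "cnt PT w = m" and PB: "cnt PB w = n - 1"
    and C: "condC m n (cfg_of m n w)"
  shows "j \<le> length w \<Longrightarrow> 0 \<le> height (take j w)"
proof (induction j)
  case 0 then show ?case by (simp add: height_def)
next
  case (Suc j)
  let ?c = "cfg_of m n w"
  have jl: "j < length w" using Suc.prems by simp
  have IH: "0 \<le> height (take j w)" using Suc by simp
  show ?case
  proof (rule ccontr)
    assume "\<not> 0 \<le> height (take (Suc j) w)"
    then have neg: "height (take j w) + hstep (w ! j) < 0" using height_take_Suc[OF jl] by simp
    have h0: "height (take j w) = 0" and wj: "w ! j = MD"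
      using neg IH by (cases "w ! j"; simp)+
    let ?xs = "take j w"
    define p where "p = Suc (cnt PT ?xs)"
    define q where "q = Suc (cnt PB ?xs)"
    have pa: "cnt PT ?xs < length (positions PT w)" "positions PT w ! cnt PT ?xs = j"
      using pos_of[OF jl, of PT] wj by auto
    have pb: "cnt PB ?xs < length (positions PB w)" "positions PB w ! cnt PB ?xs = j"
      using pos_of[OF jl, of PB] wj by auto
    have pm: "1 \<le> p" "p \<le> m" using pa PT unfolding p_def by (simp_all add: length_positions)
    have qn: "1 \<le> q" "q < n" using pb PB unfolding q_def by (simp_all add: length_positions)
    have cT: "?c (T p) = cnt QT ?xs" using cfg_T[OF pm, of n w] pa unfolding p_def count_before_def by simp
    have cB: "?c (B q) = cnt QB ?xs" using cfg_B[OF qn, of m w] pb unfolding q_def count_before_def by simp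
    have eqU: "cnt (\<lambda>s. s = MU) ?xs = cnt (\<lambda>s. s = MD) ?xs" using h0 height_cnt[of ?xs] by simp
    have "?c (T p) < q" using cT eqU cnt_QT[of ?xs] cnt_PB[of ?xs] unfolding q_def by simp
    moreover have "?c (B q) < p" using cB eqU cnt_QB[of ?xs] cnt_PT[of ?xs] unfolding p_def by simp
    moreover have "q \<le> ?c (T p) \<or> p \<le> ?c (B q)" using C pm qn unfolding condC_def by simp
    ultimately show False by linarith
  qed
qed

definition fu :: "mstep \<Rightarrow> dir" where "fu s = (if PT s then dE else dN)"
definition fl :: "mstep \<Rightarrow> dir" where "fl s = (if PB s then dN else dE)"

lemma path_at_full:
  "path_at b a 0 (hts P 1 w @ [Suc (cnt (\<lambda>s. \<not> P s) w)]) (Suc (cnt (\<lambda>s. \<not> P s) w))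
     = b # map (\<lambda>s. if P s then a else b) w @ [a]"
proof -
  let ?K = "Suc (cnt (\<lambda>s. \<not> P s) w)"
  have "path_at b a 0 (hts P 1 w @ [?K]) ?K = b # path_at b a 1 (hts P 1 w @ [?K]) ?K"
  proof (cases "hts P 1 w")
    case Nil then show ?thesis using path_at_shift[of 0 ?K b a "[]" ?K] by simp
  next
    case (Cons h hs)
    then have "1 \<le> h" using hts_bounds[of h P 1 w] by simp
    then show ?thesis using Cons path_at_shift[of 0 h b a "hs @ [?K]" ?K] by simp
  qed
  also have "\<dots> = b # map (\<lambda>s. if P s then a else b) w @ [a]"
    using path_at_hts[of b a 1 P w] by simp
  finally show ?thesis .
qed

lemma Phi_cfg:
  assumes n: "n \<ge> 1" and w: "w \<in> Motz m (n - 1)"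
  shows "Phi m n (cfg_of m n w) = (dN # map fu w @ [dE], dE # map fl w @ [dN])"
proof -
  note mc = motz_counts[OF w]
  have t1: "map (\<lambda>i. 1 + cfg_of m n w (T i)) [1..<m + 1] = hts PT 1 w"
  proof -
    have "map (\<lambda>i. 1 + cfg_of m n w (T i)) [1..<m + 1] = map Suc (map (\<lambda>i. cfg_of m n w (T i)) [1..<Suc m])"
      by simp
    also have "\<dots> = hts PT 1 w" using cfg_T_list[OF mc(1), of n] hts_Suc[of PT 0 w] by simp
    finally show ?thesis .
  qed
  have nK: "n = Suc (cnt (\<lambda>s. \<not> PT s) w)" using mc(2) n notPT by simp
  have b1: "map (\<lambda>j. 1 + cfg_of m n w (B j)) [1..<n + 1] = hts PB 1 w @ [Suc m]"
  proof -
    have "[1..<n + 1] = [1..<n] @ [n]" using n by simp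
    then have "map (\<lambda>j. 1 + cfg_of m n w (B j)) [1..<n + 1] = map Suc (map (\<lambda>j. cfg_of m n w (B j)) [1..<n]) @ [Suc m]"
      using cfg_Bn[OF n, of m w] by simp
    also have "\<dots> = hts PB 1 w @ [Suc m]" using cfg_B_list[OF mc(3) n, of m] hts_Suc[of PB 0 w] by simp
    finally show ?thesis .
  qed
  have mK: "Suc m = Suc (cnt (\<lambda>s. \<not> PB s) w)" using mc(4) notPB by simp
  have "fst (Phi m n (cfg_of m n w)) = path_at dN dE 0 (hts PT 1 w @ [n]) n"
    unfolding Phi_def fst_conv t1 by simp
  also have "\<dots> = dN # map (\<lambda>s. if PT s then dE else dN) w @ [dE]"
    using path_at_full[of dN dE PT w] nK by simp
  also have "map (\<lambda>s. if PT s then dE else dN) w = map fu w" unfolding fu_def by simp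
  finally have "fst (Phi m n (cfg_of m n w)) = dN # map fu w @ [dE]" .
  moreover have "snd (Phi m n (cfg_of m n w)) = dE # map fl w @ [dN]"
  proof -
    have "snd (Phi m n (cfg_of m n w)) = path_at dE dN 0 (hts PB 1 w @ [Suc m]) (m + 1)"
      unfolding Phi_def snd_conv b1 by simp
    also have "\<dots> = dE # map (\<lambda>s. if PB s then dN else dE) w @ [dN]"
      using path_at_full[of dE dN PB w] mK by simp
    finally show ?thesis unfolding fl_def by simp
  qed
  ultimately show ?thesis by (metis prod.collapse)
qed

lemma Xi_paths: "Xi (dN # map fu w @ [dE], dE # map fl w @ [dN]) = w"
proof -
  have "map (\<lambda>(u, l). xi_step u l) (zip (map fu w) (map fl w)) = w"
  proof (induction w)
    case Nil then show ?case by simp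
  next
    case (Cons x w) then show ?case by (cases x) (auto simp: fu_def fl_def)
  qed
  then show ?thesis unfolding Xi_def by simp
qed

lemma cnt_dir: "cnt (\<lambda>s. s = dE) xs + cnt (\<lambda>s. s = dN) xs = length xs"
proof (induction xs)
  case Nil then show ?case by simp
next
  case (Cons x xs) then show ?case by (cases x) auto
qed

lemma lpt_sum: "fst (lpt p k) + snd (lpt p k) = min k (length p)"
  unfolding lpt_def using cnt_dir[of "take k p"] by simp

lemma lpt_0[simp]: "lpt p 0 = (0, 0)" unfolding lpt_def by simp

lemma lpt_len: "lpt p (length p) = (cnt (\<lambda>s. s = dE) p, cnt (\<lambda>s. s = dN) p)"
  unfolding lpt_def by simp

lemma lpt_in: "k \<le> length p \<Longrightarrow> lpt p k \<in> lpts p"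
  unfolding lpts_def by blast

lemma lpt_fst_step: "int (fst (lpt p (Suc k))) - int (fst (lpt p k)) \<in> {0, 1}"
proof (cases "k < length p")
  case True
  then show ?thesis unfolding lpt_def by (cases "p ! k") (auto simp: take_Suc_conv_app_nth)
next
  case False
  then show ?thesis unfolding lpt_def by simp
qed

lemma discrete_ivt:
  fixes f :: "nat \<Rightarrow> int"
  assumes step: "\<And>k. \<bar>f (Suc k) - f k\<bar> \<le> 1"
  shows "f a \<le> 0 \<Longrightarrow> 0 \<le> f (a + d) \<Longrightarrow> \<exists>k. a \<le> k \<and> k \<le> a + d \<and> f k = 0"
proof (induction d)
  case 0 then show ?case by auto
next
  case (Suc d)
  show ?case
  proof (cases "0 \<le> f (a + d)")
    case True then show ?thesis using Suc by fastforce
  next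
    case False
    then have "f (Suc (a + d)) = 0" using step[of "a + d"] Suc.prems by auto
    then show ?thesis by (intro exI[of _ "Suc (a + d)"]) auto
  qed
qed

lemma take_mid: "1 \<le> k \<Longrightarrow> k \<le> Suc (length ys) \<Longrightarrow> take k (x # ys @ [z]) = x # take (k - 1) ys"
  by (cases k) auto

lemma Phi_in_Polys:
  assumes n: "n \<ge> 1" and w: "w \<in> Motz m (n - 1)"
  shows "(dN # map fu w @ [dE], dE # map fl w @ [dN]) \<in> Polys m n"
proof -
  note mc = motz_counts[OF w]
  let ?U = "dN # map fu w @ [dE]" and ?L = "dE # map fl w @ [dN]"
  have fuE: "(\<lambda>s. fu s = dE) = PT" by (auto simp: fun_eq_iff fu_def)
  have fuN: "(\<lambda>s. fu s = dN) = QT" by (auto simp: fun_eq_iff fu_def QT_iff)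
  have flE: "(\<lambda>s. fl s = dE) = QB" by (auto simp: fun_eq_iff fl_def QB_iff)
  have flN: "(\<lambda>s. fl s = dN) = PB" by (auto simp: fun_eq_iff fl_def)
  have cU: "cnt (\<lambda>s. s = dE) ?U = m + 1" "cnt (\<lambda>s. s = dN) ?U = n"
    using mc n by (simp_all add: filter_map comp_def fuE fuN)
  have cL: "cnt (\<lambda>s. s = dE) ?L = m + 1" "cnt (\<lambda>s. s = dN) ?L = n"
    using mc n by (simp_all add: filter_map comp_def flE flN)
  have lU: "length ?U = m + 1 + n" "length ?L = m + 1 + n" using mc n by simp_all
  have inter: "lpts ?U \<inter> lpts ?L = {(0, 0), (m + 1, n)}"
  proof
    show "{(0, 0), (m + 1, n)} \<subseteq> lpts ?U \<inter> lpts ?L"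
      using lpt_in[of 0 ?U] lpt_in[of 0 ?L] lpt_in[of "length ?U" ?U] lpt_in[of "length ?L" ?L]
        lpt_len[of ?U] lpt_len[of ?L] cU cL by auto
  next
    show "lpts ?U \<inter> lpts ?L \<subseteq> {(0, 0), (m + 1, n)}"
    proof
      fix z assume "z \<in> lpts ?U \<inter> lpts ?L"
      then obtain k k' where z: "z = lpt ?U k" "k \<le> length ?U" "z = lpt ?L k'" "k' \<le> length ?L"
        unfolding lpts_def by blast
      have "k = k'" using lpt_sum[of ?U k] lpt_sum[of ?L k'] z lU by simp
      show "z \<in> {(0, 0), (m + 1, n)}"
      proof (cases "k = 0 \<or> k = length ?U")
        case True then show ?thesis using z lpt_len[of ?U] cU by auto
      next
        case False
        then have k: "1 \<le> k" "k \<le> Suc (length (map fu w))" using z(2) by auto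
        let ?xs = "take (k - 1) w"
        have "fst (lpt ?U k) = cnt PT ?xs"
          unfolding lpt_def using take_mid[OF k, of dN dE] by (simp add: take_map filter_map comp_def fuE)
        moreover have "fst (lpt ?L k) = Suc (cnt QB ?xs)"
          using k unfolding lpt_def using take_mid[of k "map fl w" dE dN] by (simp add: take_map filter_map comp_def flE)
        moreover have "0 \<le> height ?xs" using w k unfolding Motz_def by auto
        ultimately have "fst (lpt ?U k) \<noteq> fst (lpt ?L k)"
          using height_cnt[of ?xs] cnt_PT[of ?xs] cnt_QB[of ?xs] by linarith
        then show ?thesis using z \<open>k = k'\<close> by simp
      qed
    qed
  qed
  show ?thesis unfolding Polys_def using lU cU cL inter by simp
qed

lemma hd_mid_last: "2 \<le> length xs \<Longrightarrow> xs = hd xs # butlast (tl xs) @ [last xs]"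
  by (cases xs) (auto simp: append_butlast_last_id)

lemma polys_shape:
  assumes n: "n \<ge> 1" and P: "(U, L) \<in> Polys m n"
  shows "U = dN # butlast (tl U) @ [dE] \<and> L = dE # butlast (tl L) @ [dN]
     \<and> length (butlast (tl U)) = m + n - 1 \<and> length (butlast (tl L)) = m + n - 1"
proof -
  let ?N = "m + 1 + n"
  have lU: "length U = ?N" and lL: "length L = ?N" and eU: "cnt (\<lambda>s. s = dE) U = m + 1"
    and eL: "cnt (\<lambda>s. s = dE) L = m + 1"
    and inter: "lpts U \<inter> lpts L = {(0, 0), (m + 1, n)}" and hU: "hd U = dN"
    using P unfolding Polys_def by auto
  have key: "k = 0 \<or> k = ?N" if "k \<le> ?N" "lpt U k = lpt L k" for k
  proof -
    have "lpt U k \<in> {(0, 0), (m + 1, n)}" using that lpt_in[of k U] lpt_in[of k L] lU lL inter by auto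
    moreover have "fst (lpt U k) + snd (lpt U k) = k" using lpt_sum[of U k] that lU by simp
    ultimately show ?thesis by auto
  qed
  have eqfst: "lpt U k = lpt L k" if "k \<le> ?N" "fst (lpt U k) = fst (lpt L k)" for k
    using lpt_sum[of U k] lpt_sum[of L k] that lU lL by (simp add: prod_eq_iff)
  have N2: "2 \<le> ?N" using n by simp
  have hL: "hd L = dE"
  proof (rule ccontr)
    assume "hd L \<noteq> dE"
    then have "hd L = dN" by (cases "hd L") auto
    then have "lpt U 1 = lpt L 1" using hU lU lL N2
      by (cases U; cases L) (auto simp: lpt_def)
    then show False using key[of 1] N2 by simp
  qed
  have fstN1: "fst (lpt p (length p - 1)) + (if last p = dE then 1 else 0) = cnt (\<lambda>s. s = dE) p"
    if "p \<noteq> []" for p :: "dir list"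
  proof -
    have "p = butlast p @ [last p]" using that by simp
    then have "cnt (\<lambda>s. s = dE) p = cnt (\<lambda>s. s = dE) (butlast p @ [last p])" by simp
    then have "cnt (\<lambda>s. s = dE) p = cnt (\<lambda>s. s = dE) (butlast p) + (if last p = dE then 1 else 0)"
      by simp
    then show ?thesis unfolding lpt_def by (simp add: butlast_conv_take)
  qed
  have Une: "U \<noteq> []" "L \<noteq> []" using lU lL by auto
  have ne: "fst (lpt U (?N - 1)) \<noteq> fst (lpt L (?N - 1))"
  proof
    assume "fst (lpt U (?N - 1)) = fst (lpt L (?N - 1))"
    then have "lpt U (?N - 1) = lpt L (?N - 1)" using eqfst[of "?N - 1"] by simp
    then show False using key[of "?N - 1"] N2 by simp
  qed
  have lastUL: "last U = dE \<and> last L = dN"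
  proof -
    have fU: "fst (lpt U (?N - 1)) + (if last U = dE then 1 else 0) = m + 1" using fstN1[OF Une(1)] lU eU by simp
    have fL: "fst (lpt L (?N - 1)) + (if last L = dE then 1 else 0) = m + 1" using fstN1[OF Une(2)] lL eL by simp
    have "\<not> (last U = dN \<and> last L = dE)"
    proof
      assume a: "last U = dN \<and> last L = dE"
      define f where "f k = int (fst (lpt U k)) - int (fst (lpt L k))" for k
      have st: "\<bar>f (Suc k) - f k\<bar> \<le> 1" for k
        using lpt_fst_step[of U k] lpt_fst_step[of L k] unfolding f_def by auto
      have f1: "f 1 \<le> 0" using hU hL Une unfolding f_def by (cases U; cases L) (auto simp: lpt_def)
      have e: "1 + (?N - 2) = m + n" using n by simp
      have fN: "0 \<le> f (1 + (?N - 2))" using fU fL a unfolding f_def e by simp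
      obtain k where k: "1 \<le> k" "k \<le> 1 + (?N - 2)" "f k = 0" using discrete_ivt[OF st f1 fN] by blast
      have kk: "k \<le> m + n" using k(2) e by simp
      then have "lpt U k = lpt L k" using eqfst[of k] k unfolding f_def by simp
      then show False using key[of k] k(1) kk by simp
    qed
    moreover have "last U \<noteq> last L" using ne fU fL by auto
    ultimately show ?thesis by (cases "last U"; cases "last L") simp_all
  qed
  show ?thesis using hd_mid_last[of U] hd_mid_last[of L] lU lL N2 hU hL lastUL by auto
qed

lemma inj_xi: "inj (\<lambda>(u, l). xi_step u l)"
proof (rule injI)
  fix x y :: "dir \<times> dir"
  assume "(case x of (u, l) \<Rightarrow> xi_step u l) = (case y of (u, l) \<Rightarrow> xi_step u l)"
  then show "x = y"
    by (cases x; cases y) (auto elim!: xi_step.elims dir.exhaust)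
qed

lemma Xi_inj:
  assumes n: "n \<ge> 1"
  shows "inj_on Xi (Polys m n)"
proof (rule inj_onI)
  fix P1 P2 assume P1: "P1 \<in> Polys m n" and P2: "P2 \<in> Polys m n" and eq: "Xi P1 = Xi P2"
  obtain U1 L1 where p1: "P1 = (U1, L1)" by (cases P1)
  obtain U2 L2 where p2: "P2 = (U2, L2)" by (cases P2)
  note s1 = polys_shape[OF n P1[unfolded p1]] and s2 = polys_shape[OF n P2[unfolded p2]]
  have "zip (butlast (tl U1)) (butlast (tl L1)) = zip (butlast (tl U2)) (butlast (tl L2))"
    using eq unfolding Xi_def p1 p2 by (simp add: inj_map_eq_map[OF inj_xi])
  then have "butlast (tl U1) = butlast (tl U2) \<and> butlast (tl L1) = butlast (tl L2)"
    using s1 s2 by (metis map_fst_zip map_snd_zip)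
  then have mids: "butlast (tl U1) = butlast (tl U2)" "butlast (tl L1) = butlast (tl L2)" by auto
  have "U1 = dN # butlast (tl U2) @ [dE]" using conjunct1[OF s1] mids(1) by simp
  then have u: "U1 = U2" using conjunct1[OF s2] by simp
  have "L1 = dE # butlast (tl L2) @ [dN]" using conjunct1[OF conjunct2[OF s1]] mids(2) by simp
  then have l: "L1 = L2" using conjunct1[OF conjunct2[OF s2]] by simp
  show "P1 = P2" using u l p1 p2 by simp
qed

lemma hts_map: "hts P k (map f xs) = hts (\<lambda>x. P (f x)) k xs"
  by (induction xs arbitrary: k) auto

lemma fu_xi: "fu (xi_step x y) = x" and fl_xi: "fl (xi_step x y) = y"
  by (cases x; cases y; simp add: fu_def fl_def)+

lemma fuE': "(\<lambda>s. fu s = dE) = PT" by (auto simp: fun_eq_iff fu_def)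
lemma fuN': "(\<lambda>s. fu s = dN) = QT" by (auto simp: fun_eq_iff fu_def QT_iff)
lemma flE': "(\<lambda>s. fl s = dE) = QB" by (auto simp: fun_eq_iff fl_def QB_iff)
lemma flN': "(\<lambda>s. fl s = dN) = PB" by (auto simp: fun_eq_iff fl_def)

lemma SDR_iff: "n \<ge> 1 \<Longrightarrow> c \<in> SDR m n \<longleftrightarrow> sorted_cfg m n c \<and> valid_cfg m n c \<and> stable m n c \<and> nofsc m n c"
  unfolding SDR_def using det_rec_iff_nofsc by blast

lemma cfg_in_SDR:
  assumes n: "n \<ge> 1" and w: "w \<in> Motz m (n - 1)"
  shows "cfg_of m n w \<in> SDR m n"
proof -
  note mc = motz_counts[OF w]
  have s: "sorted_cfg m n (cfg_of m n w)" "stable m n (cfg_of m n w)"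
    using cfg_props[OF n mc(1) mc(3) mc(2) mc(4)] by auto
  have "nofsc m n (cfg_of m n w)" using C_nofsc[OF s(1) motz_C[OF n w]] .
  then show ?thesis using SDR_iff[OF n] s cfg_valid[OF n] by blast
qed

lemma Xi_Phi_cfg:
  assumes n: "n \<ge> 1" and w: "w \<in> Motz m (n - 1)"
  shows "Xi (Phi m n (cfg_of m n w)) = w"
  using Phi_cfg[OF n w] Xi_paths by simp

lemma surj_cfg:
  assumes n: "n \<ge> 1" and c: "c \<in> SDR m n"
  shows "\<exists>w \<in> Motz m (n - 1). cfg_of m n w = c"
proof -
  have sc: "sorted_cfg m n c" and vc: "valid_cfg m n c" and st: "stable m n c" and nf: "nofsc m n c"
    using SDR_iff[OF n] c by auto
  have C: "condC m n c" using nofsc_C[OF sc nf] .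
  have stT: "1 \<le> i \<Longrightarrow> i \<le> m \<Longrightarrow> c (T i) \<le> n - 1" for i using st unfolding stable_iff by fastforce
  have stB: "1 \<le> j \<Longrightarrow> j \<le> n \<Longrightarrow> c (B j) \<le> m" for j using st unfolding stable_iff by fastforce
  have cBn: "c (B n) = m"
  proof (cases "m = 0")
    case True then show ?thesis using stB[of n] n by simp
  next
    case False
    then have "n \<le> c (T m) \<or> m \<le> c (B n)" using C n unfolding condC_def by simp
    then show ?thesis using stT[of m] stB[of n] n False by linarith
  qed
  define ct where "ct = map (\<lambda>i. c (T i)) [1..<Suc m]"
  define cb where "cb = map (\<lambda>j. c (B j)) [1..<n]"
  have lct: "length ct = m" and lcb: "length cb = n - 1" unfolding ct_def cb_def by simp_all
  have ctn: "ct ! k = c (T (Suc k))" if "k < m" for k using that unfolding ct_def by (simp del: upt_Suc)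
  have cbn: "cb ! k = c (B (Suc k))" if "k < n - 1" for k using that unfolding cb_def by (simp del: upt_Suc)
  have sct: "sorted ct" unfolding sorted_iff_nth_mono lct
    using ctn sorted_T_mono[OF sc] by (simp add: Suc_leI)
  have scb: "sorted cb" unfolding sorted_iff_nth_mono lcb
    using cbn sorted_B_mono[OF sc] by simp
  have bct: "\<forall>h\<in>set ct. 0 \<le> h \<and> h \<le> n - 1" unfolding ct_def using stT by auto
  have bcb: "\<forall>h\<in>set cb. 0 \<le> h \<and> h \<le> m" unfolding cb_def using stB by auto
  define u where "u = path_at dN dE 0 ct (n - 1)"
  define l where "l = path_at dE dN 0 cb m"
  have pu: "hts (\<lambda>d. d = dE) 0 u = ct" "length u = m + (n - 1)" "cnt (\<lambda>d. d = dE) u = m"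
      "cnt (\<lambda>d. d = dN) u = n - 1"
    using path_at_props[of dE dN ct 0 "n - 1"] sct bct lct unfolding u_def by auto
  have pl: "hts (\<lambda>d. d = dN) 0 l = cb" "length l = m + (n - 1)" "cnt (\<lambda>d. d = dN) l = n - 1"
      "cnt (\<lambda>d. d = dE) l = m"
    using path_at_props[of dN dE cb 0 m] scb bcb lcb unfolding l_def by auto
  define w where "w = map (\<lambda>(x, y). xi_step x y) (zip u l)"
  have mu: "map fu w = u" unfolding w_def using pu(2) pl(2)
    by (simp add: comp_def case_prod_unfold fu_xi)
  have ml: "map fl w = l" unfolding w_def using pu(2) pl(2)
    by (simp add: comp_def case_prod_unfold fl_xi)
  have lw: "length w = m + (n - 1)" unfolding w_def using pu(2) pl(2) by simp
  have cPT: "cnt PT w = m" using pu(3) unfolding mu[symmetric] by (simp add: filter_map comp_def fuE')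
  have cQT: "cnt QT w = n - 1" using pu(4) unfolding mu[symmetric] by (simp add: filter_map comp_def fuN')
  have cPB: "cnt PB w = n - 1" using pl(3) unfolding ml[symmetric] by (simp add: filter_map comp_def flN')
  have cQB: "cnt QB w = m" using pl(4) unfolding ml[symmetric] by (simp add: filter_map comp_def flE')
  have hT: "hts PT 0 w = ct" using pu(1) unfolding mu[symmetric] hts_map by (simp add: fuE')
  have hB: "hts PB 0 w = cb" using pl(1) unfolding ml[symmetric] hts_map by (simp add: flN')
  have eq: "cfg_of m n w = c"
  proof
    fix v show "cfg_of m n w v = c v"
    proof (cases v)
      case (T i)
      show ?thesis
      proof (cases "1 \<le> i \<and> i \<le> m")
        case True
        have "i - 1 < m" using True by arith
        then show ?thesis using cfg_T_hts[OF cPT, of i n] hT ctn[of "i - 1"] T True by simp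
      next
        case False
        then show ?thesis using vc T unfolding valid_iff cfg_of_def by auto
      qed
    next
      case (B j)
      show ?thesis
      proof (cases "1 \<le> j \<and> j < n")
        case True
        have "j - 1 < n - 1" using True by arith
        then show ?thesis using cfg_B_hts[OF cPB n, of j m] hB cbn[of "j - 1"] B True by simp
      next
        case False
        then show ?thesis using vc B cBn n unfolding valid_iff cfg_of_def by auto
      qed
    qed
  qed
  have "w \<in> Motz m (n - 1)" unfolding Motz_def
  proof (intro CollectI conjI allI impI)
    show "length w = m + (n - 1)" by (rule lw)
    show "cnt QB w = m" by (rule cQB)
    show "0 \<le> height (take j w)" if "j \<le> length w" for j
      using C_motz_height[OF n cPT cPB, of j] eq C that by simp
    show "height w = 0"
      using height_cnt[of w] cnt_PT[of w] cnt_QB[of w] cPT cQB by simp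
  qed
  then show ?thesis using eq by blast
qed

theorem theorem4p14:
  fixes m n :: nat
  assumes "n \<ge> 1"
  shows "(\<forall>w \<in> Motz m (n - 1).
            cfg_of m n w \<in> SDR m n \<and> Xi (Phi m n (cfg_of m n w)) = w)
       \<and> bij_betw (cfg_of m n) (Motz m (n - 1)) (SDR m n)
       \<and> (\<forall>w \<in> Motz m (n - 1).
            cfg_of m n w = inv_into (SDR m n) (Phi m n) (inv_into (Polys m n) Xi w))"
proof (intro conjI ballI)
  fix w assume w: "w \<in> Motz m (n - 1)"
  show "cfg_of m n w \<in> SDR m n" using cfg_in_SDR[OF assms w] .
  show "Xi (Phi m n (cfg_of m n w)) = w" using Xi_Phi_cfg[OF assms w] .
next
  have inj: "inj_on (cfg_of m n) (Motz m (n - 1))"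
  proof (rule inj_onI)
    fix w1 w2 assume a: "w1 \<in> Motz m (n - 1)" "w2 \<in> Motz m (n - 1)" "cfg_of m n w1 = cfg_of m n w2"
    have "w1 = Xi (Phi m n (cfg_of m n w1))" using Xi_Phi_cfg[OF assms a(1)] by simp
    also have "\<dots> = Xi (Phi m n (cfg_of m n w2))" using a(3) by simp
    also have "\<dots> = w2" using Xi_Phi_cfg[OF assms a(2)] by simp
    finally show "w1 = w2" .
  qed
  have img: "cfg_of m n ` Motz m (n - 1) = SDR m n"
  proof
    show "cfg_of m n ` Motz m (n - 1) \<subseteq> SDR m n" using cfg_in_SDR[OF assms] by auto
    show "SDR m n \<subseteq> cfg_of m n ` Motz m (n - 1)"
    proof
      fix c assume "c \<in> SDR m n"
      then obtain w where "w \<in> Motz m (n - 1)" "cfg_of m n w = c" using surj_cfg[OF assms] by blast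
      then show "c \<in> cfg_of m n ` Motz m (n - 1)" by blast
    qed
  qed
  show "bij_betw (cfg_of m n) (Motz m (n - 1)) (SDR m n)" using inj img unfolding bij_betw_def by blast
next
  fix w assume w: "w \<in> Motz m (n - 1)"
  have P: "inv_into (Polys m n) Xi w = Phi m n (cfg_of m n w)"
  proof (rule inv_into_f_eq[OF Xi_inj[OF assms]])
    show "Phi m n (cfg_of m n w) \<in> Polys m n" using Phi_cfg[OF assms w] Phi_in_Polys[OF assms w] by simp
    show "Xi (Phi m n (cfg_of m n w)) = w" using Xi_Phi_cfg[OF assms w] .
  qed
  have injP: "inj_on (Phi m n) (SDR m n)"
  proof (rule inj_onI)
    fix c1 c2 assume c1: "c1 \<in> SDR m n" and c2: "c2 \<in> SDR m n" and eq: "Phi m n c1 = Phi m n c2"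
    obtain w1 where w1: "w1 \<in> Motz m (n - 1)" "cfg_of m n w1 = c1" using surj_cfg[OF assms c1] by blast
    obtain w2 where w2: "w2 \<in> Motz m (n - 1)" "cfg_of m n w2 = c2" using surj_cfg[OF assms c2] by blast
    have "w1 = Xi (Phi m n c1)" using Xi_Phi_cfg[OF assms w1(1)] w1(2) by simp
    also have "\<dots> = Xi (Phi m n c2)" using eq by simp
    also have "\<dots> = w2" using Xi_Phi_cfg[OF assms w2(1)] w2(2) by simp
    finally have "w1 = w2" .
    then show "c1 = c2" using w1 w2 by simp
  qed
  show "cfg_of m n w = inv_into (SDR m n) (Phi m n) (inv_into (Polys m n) Xi w)"
    unfolding P using inv_into_f_f[OF injP cfg_in_SDR[OF assms w]] by simp
qed

end
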